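(* Let $K$ be a field, $Q$ the bipartite type $A$ quiver with vertices $y_0,x_1,\dots,x_n,y_n$ and arrows $\alpha_i\colon x_i\to y_{i-1}$, $\beta_i\colon x_i\to y_i$, $\mathbf{d}$ a dimension vector, and $\mathbf{r}$ a quiver rank array. A matrix $Z\in Y^{\mathbf{w}}_\circ$ satisfies $\operatorname{rank}Z_{i\times j}=\mathbf{b}(\mathbf{r})_{i,j}$ for all $1\le i,j\le 2n+1$ if and only if $Z=\zeta(V)$ for some $V\in\mathrm{rep}_Q(\mathbf{d})$ satisfying $\mathbf{r}$.
   Context: $\mathrm{rep}_Q(\mathbf{d})$: tuples $V=(V_a)$, $V_a\in\mathrm{Mat}_{\mathbf{d}(ha)\times\mathbf{d}(ta)}(K)$, with $\mathbf{GL}(\mathbf{d})$ acting by $g\cdot V=(g_{ha}V_ag_{ta}^{-1})$. Intervals are nonempty sets of consecutive vertices with the arrows between them. $M_Q(V)$ is the block matrix with block rows $y_0,\dots,y_n$ and block columns $x_n,\dots,x_1$, $V_{\alpha_i}$ in block $(y_{i-1},x_i)$, $V_{\beta_i}$ in block $(y_i,x_i)$, zeros elsewhere; $M_J(V)$ is its submatrix on the block rows of the $y$-vertices in $J$ and block columns of the $x$-vertices in $J$; $r_J(V)=\operatorname{rank}M_J(V)$. A quiver rank array is a function $\mathbf{r}$ on intervals such that some $V$ has $r_J(V)=\mathbf{r}_J$ for all $J$ ("$V$ satisfies $\mathbf{r}$"); $\mathcal{O}_\mathbf{r}$ is the set of such $V$. $d_x=\sum\mathbf{d}(x_i)$, $d_y=\sum\mathbf{d}(y_i)$,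 $d=d_x+d_y$; $Y^{\mathbf{w}}_\circ$ is the set of $d\times d$ matrices $\begin{pmatrix}*&\mathbf{1}_{d_y}\\ \mathbf{1}_{d_x}&0\end{pmatrix}$; $\zeta(V)=\begin{pmatrix}M_Q(V)&\mathbf{1}_{d_y}\\ \mathbf{1}_{d_x}&0\end{pmatrix}$. Row blocks have sizes $\mathbf{d}(y_0),\dots,\mathbf{d}(y_n),\mathbf{d}(x_n),\dots,\mathbf{d}(x_1)$, column blocks sizes $\mathbf{d}(x_n),\dots,\mathbf{d}(x_1),\mathbf{d}(y_0),\dots,\mathbf{d}(y_n)$, numbered $1..2n+1$; $Z_{i\times j}$ is the submatrix of block rows $1..i$ and block columns $1..j$. $\mathbf{b}(\mathbf{r})_{i,j}=\operatorname{rank}\zeta(V)_{i\times j}$ for any $V\in\mathcal{O}_\mathbf{r}$ (independent of the choice). *)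

theory Defs
  imports "Jordan_Normal_Form.DL_Rank_Submatrix"
begin

text \<open>Bipartite type A quiver with vertices y_0, x_1, y_1, ..., x_n, y_n (in this linear order,
  position 2i = y_i, position 2i-1 = x_i), arrows alpha_i : x_i -> y_(i-1), beta_i : x_i -> y_i.
  A dimension vector is given by dx i = d(x_i) (1 <= i <= n) and dy i = d(y_i) (0 <= i <= n).
  A representation V is a pair (Va, Vb) with Va i = V_alpha_i and Vb i = V_beta_i.\<close>

type_synonym 'a qrep = "(nat \<Rightarrow> 'a mat) \<times> (nat \<Rightarrow> 'a mat)"

definition mrank :: "'a::field mat \<Rightarrow> nat" where
  "mrank A = vec_space.rank (dim_row A) A"

definition rep :: "nat \<Rightarrow> (nat \<Rightarrow> nat) \<Rightarrow> (nat \<Rightarrow> nat) \<Rightarrow> 'a::field qrep set" where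
  "rep n dx dy = {(Va, Vb). \<forall>i\<in>{1..n}. Va i \<in> carrier_mat (dy (i - 1)) (dx i)
                                      \<and> Vb i \<in> carrier_mat (dy i) (dx i)}"

text \<open>Row offset of block row y_i (block rows y_0,...,y_n) and column offset of block column x_i
  (block columns x_n,...,x_1).\<close>
definition yoff :: "(nat \<Rightarrow> nat) \<Rightarrow> nat \<Rightarrow> nat" where
  "yoff dy i = (\<Sum>k<i. dy k)"

definition xoff :: "nat \<Rightarrow> (nat \<Rightarrow> nat) \<Rightarrow> nat \<Rightarrow> nat" where
  "xoff n dx i = (\<Sum>k\<in>{i<..n}. dx k)"

definition dimY :: "nat \<Rightarrow> (nat \<Rightarrow> nat) \<Rightarrow> nat" where
  "dimY n dy = (\<Sum>k\<le>n. dy k)"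

definition dimX :: "nat \<Rightarrow> (nat \<Rightarrow> nat) \<Rightarrow> nat" where
  "dimX n dx = (\<Sum>k\<in>{1..n}. dx k)"

definition blk :: "nat \<Rightarrow> nat \<Rightarrow> 'a::zero mat \<Rightarrow> nat \<Rightarrow> nat \<Rightarrow> 'a" where
  "blk r c A p q = (if r \<le> p \<and> p < r + dim_row A \<and> c \<le> q \<and> q < c + dim_col A
                    then A $$ (p - r, q - c) else 0)"

definition MQ :: "nat \<Rightarrow> (nat \<Rightarrow> nat) \<Rightarrow> (nat \<Rightarrow> nat) \<Rightarrow> 'a::field qrep \<Rightarrow> 'a mat" where
  "MQ n dx dy V = mat (dimY n dy) (dimX n dx) (\<lambda>(p, q).
      \<Sum>i\<in>{1..n}. blk (yoff dy (i - 1)) (xoff n dx i) (fst V i) p q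
                 + blk (yoff dy i) (xoff n dx i) (snd V i) p q)"

text \<open>Intervals are pairs (a,b) with a <= b <= 2n, the set of vertices at positions a..b.
  M_J(V): block rows of the y-vertices in J, block columns of the x-vertices in J.\<close>
definition MJ :: "nat \<Rightarrow> (nat \<Rightarrow> nat) \<Rightarrow> (nat \<Rightarrow> nat) \<Rightarrow> 'a::field qrep \<Rightarrow> nat \<times> nat \<Rightarrow> 'a mat" where
  "MJ n dx dy V J = submatrix (MQ n dx dy V)
      (\<Union>i\<in>{i. i \<le> n \<and> fst J \<le> 2 * i \<and> 2 * i \<le> snd J}. {yoff dy i..<yoff dy (Suc i)})
      (\<Union>i\<in>{i. 1 \<le> i \<and> i \<le> n \<and> fst J \<le> 2 * i - 1 \<and> 2 * i - 1 \<le> snd J}.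
          {xoff n dx i..<xoff n dx i + dx i})"

definition intervals :: "nat \<Rightarrow> (nat \<times> nat) set" where
  "intervals n = {(a, b). a \<le> b \<and> b \<le> 2 * n}"

definition satisfies :: "nat \<Rightarrow> (nat \<Rightarrow> nat) \<Rightarrow> (nat \<Rightarrow> nat) \<Rightarrow> 'a::field qrep \<Rightarrow> (nat \<times> nat \<Rightarrow> nat) \<Rightarrow> bool" where
  "satisfies n dx dy V r = (\<forall>J\<in>intervals n. mrank (MJ n dx dy V J) = r J)"

definition orbit_r :: "nat \<Rightarrow> (nat \<Rightarrow> nat) \<Rightarrow> (nat \<Rightarrow> nat) \<Rightarrow> (nat \<times> nat \<Rightarrow> nat) \<Rightarrow> 'a::field qrep set" where
  "orbit_r n dx dy r = {V \<in> rep n dx dy. satisfies n dx dy V r}"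

definition is_quiver_rank_array :: "'a::field itself \<Rightarrow> nat \<Rightarrow> (nat \<Rightarrow> nat) \<Rightarrow> (nat \<Rightarrow> nat) \<Rightarrow> (nat \<times> nat \<Rightarrow> nat) \<Rightarrow> bool" where
  "is_quiver_rank_array _ n dx dy r = (\<exists>V::'a qrep. V \<in> orbit_r n dx dy r)"

definition zeta :: "nat \<Rightarrow> (nat \<Rightarrow> nat) \<Rightarrow> (nat \<Rightarrow> nat) \<Rightarrow> 'a::field qrep \<Rightarrow> 'a mat" where
  "zeta n dx dy V = four_block_mat (MQ n dx dy V) (1\<^sub>m (dimY n dy)) (1\<^sub>m (dimX n dx)) (0\<^sub>m (dimX n dx) (dimY n dy))"

definition Yw :: "nat \<Rightarrow> (nat \<Rightarrow> nat) \<Rightarrow> (nat \<Rightarrow> nat) \<Rightarrow> 'a::field mat set" where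
  "Yw n dx dy = {four_block_mat S (1\<^sub>m (dimY n dy)) (1\<^sub>m (dimX n dx)) (0\<^sub>m (dimX n dx) (dimY n dy)) | S.
                 S \<in> carrier_mat (dimY n dy) (dimX n dx)}"

definition row_blocks :: "nat \<Rightarrow> (nat \<Rightarrow> nat) \<Rightarrow> (nat \<Rightarrow> nat) \<Rightarrow> nat list" where
  "row_blocks n dx dy = map dy [0..<Suc n] @ map dx (rev [1..<Suc n])"

definition col_blocks :: "nat \<Rightarrow> (nat \<Rightarrow> nat) \<Rightarrow> (nat \<Rightarrow> nat) \<Rightarrow> nat list" where
  "col_blocks n dx dy = map dx (rev [1..<Suc n]) @ map dy [0..<Suc n]"

definition topleft :: "nat \<Rightarrow> (nat \<Rightarrow> nat) \<Rightarrow> (nat \<Rightarrow> nat) \<Rightarrow> 'a mat \<Rightarrow> nat \<Rightarrow> nat \<Rightarrow> 'a mat" where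
  "topleft n dx dy Z i j = submatrix Z {..<sum_list (take i (row_blocks n dx dy))}
                                       {..<sum_list (take j (col_blocks n dx dy))}"

text \<open>b(r)_{i,j} = rank zeta(V)_{i x j} for (any) V in O_r; here a chosen one.\<close>
definition bmat :: "'a::field itself \<Rightarrow> nat \<Rightarrow> (nat \<Rightarrow> nat) \<Rightarrow> (nat \<Rightarrow> nat) \<Rightarrow> (nat \<times> nat \<Rightarrow> nat) \<Rightarrow> nat \<Rightarrow> nat \<Rightarrow> nat" where
  "bmat _ n dx dy r i j =
     mrank (topleft n dx dy (zeta n dx dy (SOME V::'a qrep. V \<in> orbit_r n dx dy r)) i j)"

end

theory Submission
  imports Defs
begin


definition indep :: "(nat \<Rightarrow> nat \<Rightarrow> 'a::field) \<Rightarrow> nat set \<Rightarrow> nat set \<Rightarrow> bool" where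
  "indep f R U \<longleftrightarrow> (\<forall>c. (\<forall>p\<in>R. (\<Sum>q\<in>U. c q * f p q) = 0) \<longrightarrow> (\<forall>q\<in>U. c q = 0))"

definition crk :: "(nat \<Rightarrow> nat \<Rightarrow> 'a::field) \<Rightarrow> nat set \<Rightarrow> nat set \<Rightarrow> nat" where
  "crk f R C = Max (card ` {U. U \<subseteq> C \<and> indep f R U})"

lemma indep_empty[simp]: "indep f R {}" unfolding indep_def by auto

lemma crk_fin: "finite C \<Longrightarrow> finite {U. U \<subseteq> C \<and> indep f R U}"
  by (rule finite_subset[of _ "Pow C"]) auto

lemma crk_ge: assumes "finite C" "U \<subseteq> C" "indep f R U" shows "card U \<le> crk f R C"
  unfolding crk_def
  by (rule Max_ge) (use assms crk_fin[OF assms(1)] in auto)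

lemma crk_obtain: assumes "finite C" obtains U where "U \<subseteq> C" "indep f R U" "card U = crk f R C"
proof -
  have ne: "{} \<in> {U. U \<subseteq> C \<and> indep f R U}" by simp
  have "crk f R C \<in> card ` {U. U \<subseteq> C \<and> indep f R U}"
    unfolding crk_def
    by (rule Max_in) (use crk_fin[OF assms(1), of f R] ne in blast)+
  then obtain U where U: "U \<in> {U. U \<subseteq> C \<and> indep f R U}" "crk f R C = card U" by (rule imageE)
  show ?thesis by (rule that) (use U in simp_all)
qed

lemma crk_eqI:
  assumes "finite C" "\<And>U. U \<subseteq> C \<Longrightarrow> indep f R U \<Longrightarrow> card U \<le> k"
    "U0 \<subseteq> C" "indep f R U0" "card U0 = k"
  shows "crk f R C = k"
proof -
  obtain U where "U \<subseteq> C" "indep f R U" "card U = crk f R C" using crk_obtain[OF assms(1)] by blast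
  have "card U \<le> k" by (rule assms(2)) fact+
  then have "crk f R C \<le> k" using \<open>card U = crk f R C\<close> by simp
  moreover have "k \<le> crk f R C" using crk_ge[OF assms(1,3,4)] assms(5) by simp
  ultimately show ?thesis by simp
qed

lemma indep_subset: assumes "indep f R U" "V \<subseteq> U" "finite U" shows "indep f R V"
  unfolding indep_def
proof (intro allI impI)
  fix c assume h: "\<forall>p\<in>R. (\<Sum>q\<in>V. c q * f p q) = 0"
  define c' where "c' = (\<lambda>q. if q \<in> V then c q else 0)"
  have "(\<Sum>q\<in>U. c' q * f p q) = (\<Sum>q\<in>V. c q * f p q)" for p
  proof -
    have "(\<Sum>q\<in>U. c' q * f p q) = (\<Sum>q\<in>U. if q \<in> V then c q * f p q else 0)"
      by (rule sum.cong) (auto simp: c'_def)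
    also have "\<dots> = (\<Sum>q\<in>U \<inter> V. c q * f p q)" using sum.inter_restrict[OF assms(3), symmetric] by simp
    also have "U \<inter> V = V" using assms(2) by blast
    finally show ?thesis .
  qed
  with h have "\<forall>p\<in>R. (\<Sum>q\<in>U. c' q * f p q) = 0" by simp
  with assms(1) have "\<forall>q\<in>U. c' q = 0" unfolding indep_def by blast
  then show "\<forall>q\<in>V. c q = 0" using assms(2) unfolding c'_def by (metis subsetD)
qed

lemma indep_cong: assumes "\<And>p q. p \<in> R \<Longrightarrow> q \<in> U \<Longrightarrow> f p q = g p q"
  shows "indep f R U = indep g R U"
  unfolding indep_def using assms by (simp cong: sum.cong)

lemma crk_cong: assumes "\<And>p q. p \<in> R \<Longrightarrow> q \<in> C \<Longrightarrow> f p q = g p q"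
  shows "crk f R C = crk g R C"
proof -
  have "{U. U \<subseteq> C \<and> indep f R U} = {U. U \<subseteq> C \<and> indep g R U}"
    using indep_cong[of R _ f g] assms by blast
  then show ?thesis unfolding crk_def by simp
qed

lemma indepD: "indep f R U \<Longrightarrow> (\<And>p. p \<in> R \<Longrightarrow> (\<Sum>q\<in>U. c q * f p q) = 0) \<Longrightarrow> q \<in> U \<Longrightarrow> c q = 0"
  unfolding indep_def by blast

lemma indepI: "(\<And>c q. (\<And>p. p \<in> R \<Longrightarrow> (\<Sum>q\<in>U. c q * f p q) = 0) \<Longrightarrow> q \<in> U \<Longrightarrow> c q = 0) \<Longrightarrow> indep f R U"
  unfolding indep_def by blast

lemma crk_zero_rows:
  assumes "\<And>p q. p \<in> R2 \<Longrightarrow> q \<in> C \<Longrightarrow> f p q = 0"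
  shows "crk f (R \<union> R2) C = crk f R C"
proof -
  have "indep f (R \<union> R2) U = indep f R U" if U: "U \<subseteq> C" for U
  proof -
    have z: "(\<Sum>q\<in>U. c q * f p q) = 0" if "p \<in> R2" for p c
      using assms[OF that] U by (intro sum.neutral) auto
    show ?thesis
    proof
      assume iA: "indep f (R \<union> R2) U"
      show "indep f R U"
      proof (rule indepI)
        fix c q assume h: "\<And>p. p \<in> R \<Longrightarrow> (\<Sum>q\<in>U. c q * f p q) = 0" and q: "q \<in> U"
        show "c q = 0"
        proof (rule indepD[OF iA _ q])
          fix p assume "p \<in> R \<union> R2" then show "(\<Sum>q\<in>U. c q * f p q) = 0" using h z by blast
        qed
      qed
    next
      assume iA: "indep f R U"
      show "indep f (R \<union> R2) U"
      proof (rule indepI)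
        fix c q assume h: "\<And>p. p \<in> R \<union> R2 \<Longrightarrow> (\<Sum>q\<in>U. c q * f p q) = 0" and q: "q \<in> U"
        show "c q = 0"
        proof (rule indepD[OF iA _ q])
          fix p assume "p \<in> R" then show "(\<Sum>q\<in>U. c q * f p q) = 0" using h by blast
        qed
      qed
    qed
  qed
  then have "{U. U \<subseteq> C \<and> indep f (R \<union> R2) U} = {U. U \<subseteq> C \<and> indep f R U}"
    by (intro Collect_cong conj_cong refl)
  then show ?thesis unfolding crk_def by simp
qed

lemma indep_no_zero_col:
  assumes "indep f R U" "q0 \<in> U" "finite U" "\<And>p. p \<in> R \<Longrightarrow> f p q0 = 0" shows False
proof -
  define c where "c = (\<lambda>q. if q = q0 then (1::'a) else 0)"
  have s: "(\<Sum>q\<in>U. c q * f p q) = f p q0" for p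
  proof -
    have "(\<Sum>q\<in>U. c q * f p q) = (\<Sum>q\<in>U. if q = q0 then f p q else 0)"
      by (rule sum.cong) (auto simp: c_def)
    also have "\<dots> = f p q0" using assms(2,3) by simp
    finally show ?thesis .
  qed
  have "c q0 = 0"
    by (rule indepD[OF assms(1) _ assms(2)]) (simp add: s assms(4))
  then show False unfolding c_def by simp
qed

lemma crk_zero_cols:
  assumes "finite C" "finite C2" "\<And>p q. p \<in> R \<Longrightarrow> q \<in> C2 \<Longrightarrow> f p q = 0"
  shows "crk f R (C \<union> C2) = crk f R C"
proof -
  have "U \<subseteq> C" if U: "U \<subseteq> C \<union> C2" and iU: "indep f R U" for U
  proof
    fix q assume q: "q \<in> U"
    have finU: "finite U" using U assms(1,2) finite_subset by blast
    show "q \<in> C"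
    proof (rule ccontr)
      assume "q \<notin> C" then have "q \<in> C2" using U q by blast
      then show False using indep_no_zero_col[OF iU q finU] assms(3) by blast
    qed
  qed
  then have "{U. U \<subseteq> C \<union> C2 \<and> indep f R U} = {U. U \<subseteq> C \<and> indep f R U}" by blast
  then show ?thesis unfolding crk_def by simp
qed

lemma crk_zero:
  assumes "finite C" "\<And>p q. p \<in> R \<Longrightarrow> q \<in> C \<Longrightarrow> f p q = 0"
  shows "crk f R C = 0"
  using crk_zero_cols[of "{}" C R f] assms by (simp add: crk_def)

lemma crk_zero_imp:
  assumes "finite C" "crk f R C = 0" "p \<in> R" "q \<in> C" shows "f p q = 0"
proof (rule ccontr)
  assume nz: "f p q \<noteq> 0"
  have "indep f R {q}" unfolding indep_def using nz assms(3) by auto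
  then have "card {q} \<le> crk f R C" using crk_ge[OF assms(1)] assms(4) by blast
  with assms(2) show False by simp
qed

lemma crk_support:
  assumes "finite C" "\<And>p q. p \<in> R \<Longrightarrow> q \<in> C \<Longrightarrow> f p q \<noteq> 0 \<Longrightarrow> p \<in> R' \<and> q \<in> C'"
  shows "crk f R C = crk f (R \<inter> R') (C \<inter> C')"
proof -
  have e1: "(R \<inter> R') \<union> (R - R') = R" by blast
  have e2: "(C \<inter> C') \<union> (C - C') = C" by blast
  have 1: "crk f ((R \<inter> R') \<union> (R - R')) C = crk f (R \<inter> R') C" by (rule crk_zero_rows) (use assms in auto)
  have 2: "crk f (R \<inter> R') ((C \<inter> C') \<union> (C - C')) = crk f (R \<inter> R') (C \<inter> C')" by (rule crk_zero_cols) (use assms in auto)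
  show ?thesis using 1 2 unfolding e1 e2 by simp
qed

lemma crk_support2:
  assumes "finite C" "finite C'"
    "\<And>p q. p \<in> R \<Longrightarrow> q \<in> C \<Longrightarrow> f p q \<noteq> 0 \<Longrightarrow> p \<in> R' \<and> q \<in> C'"
    "\<And>p q. p \<in> R' \<Longrightarrow> q \<in> C' \<Longrightarrow> f p q \<noteq> 0 \<Longrightarrow> p \<in> R \<and> q \<in> C"
  shows "crk f R C = crk f R' C'"
proof -
  have 1: "crk f R C = crk f (R \<inter> R') (C \<inter> C')" by (rule crk_support[OF assms(1) assms(3)])
  have 2: "crk f R' C' = crk f (R' \<inter> R) (C' \<inter> C)" by (rule crk_support[OF assms(2) assms(4)])
  have 3: "R' \<inter> R = R \<inter> R'" "C' \<inter> C = C \<inter> C'" by blast+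
  show ?thesis unfolding 1 2 3 ..
qed


lemma indep_finite_sum_split:
  assumes "finite U" "j0 \<in> U"
  shows "(\<Sum>q\<in>U. c q * f p q) = c j0 * f p j0 + (\<Sum>q\<in>U - {j0}. c q * f p q)"
  using assms by (simp add: sum.remove)

lemma crk_unit_row:
  assumes "finite C" "r \<in> R" "j0 \<in> C" "f r j0 \<noteq> 0" "\<And>q. q \<in> C \<Longrightarrow> q \<noteq> j0 \<Longrightarrow> f r q = 0"
  shows "crk f R C = Suc (crk f (R - {r}) (C - {j0}))"
proof -
  obtain U0 where U0: "U0 \<subseteq> C - {j0}" "indep f (R - {r}) U0" "card U0 = crk f (R - {r}) (C - {j0})"
    using crk_obtain[of "C - {j0}"] assms(1) by blast
  have finU0: "finite U0" using U0(1) assms(1) finite_subset by blast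
  have i1: "indep f R (insert j0 U0)"
    unfolding indep_def
  proof (intro allI impI)
    fix c assume h: "\<forall>p\<in>R. (\<Sum>q\<in>insert j0 U0. c q * f p q) = 0"
    have j0U0: "j0 \<notin> U0" using U0(1) by auto
    have "(\<Sum>q\<in>U0. c q * f r q) = 0"
      by (rule sum.neutral) (use U0(1) assms(5) in auto)
    moreover have "(\<Sum>q\<in>insert j0 U0. c q * f r q) = 0" using h assms(2) by blast
    ultimately have "c j0 * f r j0 = 0" using finU0 j0U0 by simp
    then have cj0: "c j0 = 0" using assms(4) by simp
    have "\<forall>p\<in>R - {r}. (\<Sum>q\<in>U0. c q * f p q) = 0" using h finU0 j0U0 cj0 by simp
    then have "\<forall>q\<in>U0. c q = 0" using U0(2) unfolding indep_def by blast
    then show "\<forall>q\<in>insert j0 U0. c q = 0" using cj0 by simp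
  qed
  have i2: "insert j0 U0 \<subseteq> C" using U0(1) assms(3) by auto
  have i3: "card (insert j0 U0) = Suc (crk f (R - {r}) (C - {j0}))"
  proof -
    have "j0 \<notin> U0" using U0(1) by blast
    then show ?thesis using finU0 U0(3) by simp
  qed
  have i4: "card U \<le> Suc (crk f (R - {r}) (C - {j0}))" if "U \<subseteq> C" "indep f R U" for U
  proof -
    have finU: "finite U" using that(1) assms(1) finite_subset by blast
    have i1: "indep f R (U - {j0})" using indep_subset[OF that(2) _ finU] by blast
    have "indep f (R - {r}) (U - {j0})"
      unfolding indep_def
    proof (intro allI impI)
      fix c assume h: "\<forall>p\<in>R - {r}. (\<Sum>q\<in>U - {j0}. c q * f p q) = 0"
      have "(\<Sum>q\<in>U - {j0}. c q * f r q) = 0"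
        by (rule sum.neutral) (use that(1) assms(5) in auto)
      then have "\<forall>p\<in>R. (\<Sum>q\<in>U - {j0}. c q * f p q) = 0" using h by auto
      then show "\<forall>q\<in>U - {j0}. c q = 0" using i1 unfolding indep_def by blast
    qed
    then have "card (U - {j0}) \<le> crk f (R - {r}) (C - {j0})"
      using crk_ge[of "C - {j0}"] assms(1) that(1) by blast
    then show ?thesis using finU by (simp add: card_Diff_singleton_if split: if_splits)
  qed
  show ?thesis by (rule crk_eqI[OF assms(1) i4 i2 i1 i3])
qed

lemma indep_del_row:
  assumes "indep f R U" "finite U"
  shows "\<exists>U'\<subseteq>U. card U \<le> Suc (card U') \<and> indep f (R - {r}) U'"
proof (cases "indep f (R - {r}) U")
  case True then show ?thesis by (intro exI[of _ U]) auto
next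
  case False
  then obtain c where c: "\<forall>p\<in>R - {r}. (\<Sum>q\<in>U. c q * f p q) = 0" and "\<exists>q\<in>U. c q \<noteq> 0"
    unfolding indep_def by blast
  then obtain q1 where q1: "q1 \<in> U" "c q1 \<noteq> 0" by blast
  define a where "a = (\<Sum>q\<in>U. c q * f r q)"
  have a: "a \<noteq> 0 \<and> r \<in> R"
  proof (rule ccontr)
    assume "\<not> (a \<noteq> 0 \<and> r \<in> R)"
    then have "\<forall>p\<in>R. (\<Sum>q\<in>U. c q * f p q) = 0" using c unfolding a_def by auto
    then show False using assms(1) q1 unfolding indep_def by blast
  qed
  have "indep f (R - {r}) (U - {q1})"
    unfolding indep_def
  proof (intro allI impI)
    fix d assume h: "\<forall>p\<in>R - {r}. (\<Sum>q\<in>U - {q1}. d q * f p q) = 0"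
    define d' where "d' = (\<lambda>q. if q = q1 then 0 else d q)"
    have dd: "(\<Sum>q\<in>U. d' q * f p q) = (\<Sum>q\<in>U - {q1}. d q * f p q)" for p
    proof -
      have "(\<Sum>q\<in>U. d' q * f p q) = d' q1 * f p q1 + (\<Sum>q\<in>U - {q1}. d' q * f p q)"
        by (rule indep_finite_sum_split[OF assms(2) q1(1)])
      also have "(\<Sum>q\<in>U - {q1}. d' q * f p q) = (\<Sum>q\<in>U - {q1}. d q * f p q)"
        by (rule sum.cong) (auto simp: d'_def)
      finally show ?thesis by (simp add: d'_def)
    qed
    define b where "b = (\<Sum>q\<in>U. d' q * f r q)"
    define e where "e = (\<lambda>q. b * c q - a * d' q)"
    have es: "(\<Sum>q\<in>U. e q * f p q) = b * (\<Sum>q\<in>U. c q * f p q) - a * (\<Sum>q\<in>U. d' q * f p q)" for p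
    proof -
      have "(\<Sum>q\<in>U. e q * f p q) = (\<Sum>q\<in>U. b * (c q * f p q) - a * (d' q * f p q))"
        by (rule sum.cong) (simp_all add: e_def left_diff_distrib)
      also have "\<dots> = (\<Sum>q\<in>U. b * (c q * f p q)) - (\<Sum>q\<in>U. a * (d' q * f p q))"
        by (rule sum_subtractf)
      also have "\<dots> = b * (\<Sum>q\<in>U. c q * f p q) - a * (\<Sum>q\<in>U. d' q * f p q)"
        by (simp only: sum_distrib_left)
      finally show ?thesis .
    qed
    have "\<forall>p\<in>R. (\<Sum>q\<in>U. e q * f p q) = 0"
    proof
      fix p assume "p \<in> R"
      show "(\<Sum>q\<in>U. e q * f p q) = 0"
      proof (cases "p = r")
        case True then show ?thesis unfolding es by (simp add: a_def b_def)
      next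
        case False then show ?thesis unfolding es using c h dd \<open>p \<in> R\<close> by simp
      qed
    qed
    then have e0: "\<forall>q\<in>U. e q = 0" using assms(1) unfolding indep_def by blast
    then have "b * c q1 = 0" using q1(1) unfolding e_def d'_def by auto
    then have "b = 0" using q1(2) by simp
    show "\<forall>q\<in>U - {q1}. d q = 0"
    proof
      fix q assume q: "q \<in> U - {q1}"
      then have "e q = 0" using e0 by blast
      then have "a * d q = 0" using q \<open>b = 0\<close> unfolding e_def d'_def by simp
      then show "d q = 0" using a by simp
    qed
  qed
  moreover have "card U \<le> Suc (card (U - {q1}))" using q1(1) assms(2) by (simp add: card_Diff_singleton)
  ultimately show ?thesis by (intro exI[of _ "U - {q1}"]) auto
qed

lemma crk_unit_col:
  assumes "finite C" "r \<in> R" "j0 \<in> C" "f r j0 \<noteq> 0" "\<And>p. p \<in> R \<Longrightarrow> p \<noteq> r \<Longrightarrow> f p j0 = 0"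
  shows "crk f R C = Suc (crk f (R - {r}) (C - {j0}))"
proof -
  obtain U0 where U0: "U0 \<subseteq> C - {j0}" "indep f (R - {r}) U0" "card U0 = crk f (R - {r}) (C - {j0})"
    using crk_obtain[of "C - {j0}"] assms(1) by blast
  have finU0: "finite U0" using U0(1) assms(1) finite_subset by blast
  have j0U0: "j0 \<notin> U0" using U0(1) by auto
  have i1: "indep f R (insert j0 U0)"
    unfolding indep_def
  proof (intro allI impI)
    fix c assume h: "\<forall>p\<in>R. (\<Sum>q\<in>insert j0 U0. c q * f p q) = 0"
    have "\<forall>p\<in>R - {r}. (\<Sum>q\<in>U0. c q * f p q) = 0"
    proof
      fix p assume p: "p \<in> R - {r}"
      have "(\<Sum>q\<in>insert j0 U0. c q * f p q) = 0" using h p by blast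
      then have "c j0 * f p j0 + (\<Sum>q\<in>U0. c q * f p q) = 0" using finU0 j0U0 by simp
      then show "(\<Sum>q\<in>U0. c q * f p q) = 0" using assms(5)[of p] p by simp
    qed
    then have cU: "\<forall>q\<in>U0. c q = 0" using U0(2) unfolding indep_def by blast
    have "(\<Sum>q\<in>U0. c q * f r q) = 0" using cU by simp
    moreover have "(\<Sum>q\<in>insert j0 U0. c q * f r q) = 0" using h assms(2) by blast
    ultimately have "c j0 * f r j0 = 0" using finU0 j0U0 by simp
    then have cj0: "c j0 = 0" using assms(4) by simp
    then show "\<forall>q\<in>insert j0 U0. c q = 0" using cU by simp
  qed
  have i2: "insert j0 U0 \<subseteq> C" using U0(1) assms(3) by auto
  have i3: "card (insert j0 U0) = Suc (crk f (R - {r}) (C - {j0}))"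
  proof -
    have "j0 \<notin> U0" using U0(1) by blast
    then show ?thesis using finU0 U0(3) by simp
  qed
  have i4: "card U \<le> Suc (crk f (R - {r}) (C - {j0}))" if UC: "U \<subseteq> C" and iU: "indep f R U" for U
  proof (cases "j0 \<in> U")
    case True
    have finU: "finite U" using UC assms(1) finite_subset by blast
    have "indep f (R - {r}) (U - {j0})"
      unfolding indep_def
    proof (intro allI impI)
      fix c assume h: "\<forall>p\<in>R - {r}. (\<Sum>q\<in>U - {j0}. c q * f p q) = 0"
      define c' where "c' = c(j0 := - (\<Sum>q\<in>U - {j0}. c q * f r q) / f r j0)"
      have s: "(\<Sum>q\<in>U. c' q * f p q) = c' j0 * f p j0 + (\<Sum>q\<in>U - {j0}. c q * f p q)" for p
      proof -
        have "(\<Sum>q\<in>U. c' q * f p q) = c' j0 * f p j0 + (\<Sum>q\<in>U - {j0}. c' q * f p q)"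
          by (rule indep_finite_sum_split[OF finU True])
        also have "(\<Sum>q\<in>U - {j0}. c' q * f p q) = (\<Sum>q\<in>U - {j0}. c q * f p q)"
          by (rule sum.cong) (auto simp: c'_def)
        finally show ?thesis .
      qed
      have "\<forall>p\<in>R. (\<Sum>q\<in>U. c' q * f p q) = 0"
      proof
        fix p assume "p \<in> R"
        show "(\<Sum>q\<in>U. c' q * f p q) = 0"
        proof (cases "p = r")
          case True
          have "c' j0 * f p j0 = - (\<Sum>q\<in>U - {j0}. c q * f r q)"
            using assms(4) True unfolding c'_def by simp
          then show ?thesis unfolding s True by simp
        next
          case False then show ?thesis unfolding s using h assms(5) \<open>p \<in> R\<close> by simp
        qed
      qed
      then have "\<forall>q\<in>U. c' q = 0" using iU unfolding indep_def by blast
      then show "\<forall>q\<in>U - {j0}. c q = 0"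
      proof (intro ballI)
        fix q assume c0: "\<forall>q\<in>U. c' q = 0" and q: "q \<in> U - {j0}"
        then have "c' q = 0" by blast
        moreover have "c' q = c q" using q unfolding c'_def by simp
        ultimately show "c q = 0" by simp
      qed
    qed
    then have "card (U - {j0}) \<le> crk f (R - {r}) (C - {j0})"
      using crk_ge[of "C - {j0}"] assms(1) UC by blast
    then show ?thesis using finU True by (simp add: card_Diff_singleton)
  next
    case False
    have finU: "finite U" using UC assms(1) finite_subset by blast
    obtain U' where "U' \<subseteq> U" "card U \<le> Suc (card U')" "indep f (R - {r}) U'"
      using indep_del_row[OF iU finU] by blast
    moreover have "U' \<subseteq> C - {j0}" using \<open>U' \<subseteq> U\<close> UC False by auto
    ultimately show ?thesis using crk_ge[of "C - {j0}" U' f "R - {r}"] assms(1) by simp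
  qed
  show ?thesis by (rule crk_eqI[OF assms(1) i4 i2 i1 i3])
qed

lemma crk_unit_rows:
  assumes "finite P" "finite C" "P \<subseteq> R" "inj_on \<sigma> P" "\<sigma> ` P \<subseteq> C"
    "\<And>p. p \<in> P \<Longrightarrow> f p (\<sigma> p) \<noteq> 0" "\<And>p q. p \<in> P \<Longrightarrow> q \<in> C \<Longrightarrow> q \<noteq> \<sigma> p \<Longrightarrow> f p q = 0"
  shows "crk f R C = card P + crk f (R - P) (C - \<sigma> ` P)"
  using assms
proof (induction P arbitrary: R C rule: finite_induct)
  case empty then show ?case by simp
next
  case (insert p P)
  have "crk f R C = Suc (crk f (R - {p}) (C - {\<sigma> p}))"
    by (rule crk_unit_row) (use insert.prems in auto)
  also have "crk f (R - {p}) (C - {\<sigma> p}) = card P + crk f (R - {p} - P) (C - {\<sigma> p} - \<sigma> ` P)"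
  proof (rule insert.IH)
    show "\<sigma> ` P \<subseteq> C - {\<sigma> p}" using insert.prems(3,4) insert.hyps(2) by (auto simp: inj_on_def)
  qed (use insert.prems insert.hyps in \<open>auto simp: inj_on_def\<close>)
  finally have calc: "crk f R C = Suc (card P + crk f (R - {p} - P) (C - {\<sigma> p} - \<sigma> ` P))" .
  have e1: "R - {p} - P = R - insert p P" by blast
  have e2: "C - {\<sigma> p} - \<sigma> ` P = C - \<sigma> ` insert p P" by auto
  have c: "card (insert p P) = Suc (card P)" by (rule card_insert_disjoint) (use insert.hyps in auto)
  show ?case unfolding c add_Suc using calc e1 e2 by (simp only:)
qed

lemma crk_unit_cols:
  assumes "finite Q" "finite C" "Q \<subseteq> C" "inj_on \<tau> Q" "\<tau> ` Q \<subseteq> R"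
    "\<And>q. q \<in> Q \<Longrightarrow> f (\<tau> q) q \<noteq> 0" "\<And>p q. q \<in> Q \<Longrightarrow> p \<in> R \<Longrightarrow> p \<noteq> \<tau> q \<Longrightarrow> f p q = 0"
  shows "crk f R C = card Q + crk f (R - \<tau> ` Q) (C - Q)"
  using assms
proof (induction Q arbitrary: R C rule: finite_induct)
  case empty then show ?case by simp
next
  case (insert q Q)
  have "crk f R C = Suc (crk f (R - {\<tau> q}) (C - {q}))"
    by (rule crk_unit_col) (use insert.prems in auto)
  also have "crk f (R - {\<tau> q}) (C - {q}) = card Q + crk f (R - {\<tau> q} - \<tau> ` Q) (C - {q} - Q)"
  proof (rule insert.IH)
    show "\<tau> ` Q \<subseteq> R - {\<tau> q}" using insert.prems(3,4) insert.hyps(2) by (auto simp: inj_on_def)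
  qed (use insert.prems insert.hyps in \<open>auto simp: inj_on_def\<close>)
  finally have calc: "crk f R C = Suc (card Q + crk f (R - {\<tau> q} - \<tau> ` Q) (C - {q} - Q))" .
  have e1: "C - {q} - Q = C - insert q Q" by blast
  have e2: "R - {\<tau> q} - \<tau> ` Q = R - \<tau> ` insert q Q" by auto
  have c: "card (insert q Q) = Suc (card Q)" by (rule card_insert_disjoint) (use insert.hyps in auto)
  show ?case unfolding c add_Suc using calc e1 e2 by (simp only:)
qed


context vec_space
begin

lemma rank_crk:
  assumes A: "A \<in> carrier_mat n nc"
  shows "rank A = crk (\<lambda>p q. A $$ (p,q)) {..<n} {..<nc}"
proof (rule antisym)
  let ?f = "\<lambda>p q. A $$ (p,q)"
  have colsub: "set (cols A) \<subseteq> carrier_vec n" using A cols_dim by blast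
  have setcols: "set (cols A) = col A ` {..<nc}"
    using A by (auto simp: cols_def)
  have colidx: "col A j $ i = A $$ (i,j)" if "i < n" "j < nc" for i j
    using A that by auto
  show "crk ?f {..<n} {..<nc} \<le> rank A"
  proof -
    obtain U where U: "U \<subseteq> {..<nc}" "indep ?f {..<n} U" "card U = crk ?f {..<n} {..<nc}"
      using crk_obtain[of "{..<nc}"] by blast
    have finU: "finite U" using U(1) finite_subset by blast
    have inj: "inj_on (col A) U"
    proof (rule inj_onI)
      fix j j' assume j: "j \<in> U" "j' \<in> U" "col A j = col A j'"
      show "j = j'"
      proof (rule ccontr)
        assume ne: "j \<noteq> j'"
        define c where "c = (\<lambda>q. if q = j then (1::'a) else if q = j' then -1 else 0)"
        have "c j = 0"
        proof (rule indepD[OF U(2) _ j(1)])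
          fix p assume p: "p \<in> {..<n}"
          have "(\<Sum>q\<in>U. c q * ?f p q) = (\<Sum>q\<in>U. (if q = j then ?f p j else 0) + (if q = j' then - ?f p j' else 0))"
            by (rule sum.cong) (use ne in \<open>auto simp: c_def\<close>)
          also have "\<dots> = ?f p j - ?f p j'" using finU j by (simp add: sum.distrib)
          also have "?f p j = ?f p j'"
          proof -
            have "j < nc" "j' < nc" "p < n" using j(1,2) U(1) p by auto
            then show ?thesis using colidx[of p j] colidx[of p j'] j(3) by simp
          qed
          finally show "(\<Sum>q\<in>U. c q * ?f p q) = 0" by simp
        qed
        then show False by (simp add: c_def)
      qed
    qed
    define T where "T = col A ` U"
    have finT: "finite T" using finU T_def by simp
    have Tsub: "T \<subseteq> set (cols A)" using setcols U(1) T_def by auto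
    have TC: "T \<subseteq> carrier_vec n" using Tsub colsub by blast
    have key: "\<forall>v\<in>T. a v = 0" if a2: "lincomb a T = 0\<^sub>v n" for a
    proof -
      have "(a \<circ> col A) j = 0" if "j \<in> U" for j
      proof (rule indepD[OF U(2) _ that])
        fix p assume p: "p \<in> {..<n}"
        have "lincomb a T $ p = (\<Sum>x\<in>T. a x * x $ p)" using lincomb_index[of p T a] p TC by simp
        also have "\<dots> = (\<Sum>j\<in>U. a (col A j) * col A j $ p)"
          unfolding T_def by (rule sum.reindex[OF inj, unfolded comp_def])
        also have "\<dots> = (\<Sum>j\<in>U. (a \<circ> col A) j * ?f p j)"
          by (rule sum.cong) (use colidx p U(1) in auto)
        finally show "(\<Sum>j\<in>U. (a \<circ> col A) j * ?f p j) = 0" using a2 p by simp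
      qed
      then show ?thesis unfolding T_def by auto
    qed
    have "lin_indpt T"
      by (intro finite_lin_indpt2[OF finT]) (use TC key in auto)
    then have "card T \<le> rank A" using rank_ge_card_indpt[OF A Tsub] by blast
    moreover have "card T = card U" unfolding T_def using card_image[OF inj] .
    ultimately show ?thesis using U(3) by simp
  qed
  show "rank A \<le> crk ?f {..<n} {..<nc}"
  proof -
    obtain S where S: "maximal S (\<lambda>T. T \<subseteq> set (cols A) \<and> lin_indpt T)"
      using maximal_exists[of "(\<lambda>T. T \<subseteq> set (cols A) \<and> lin_indpt T)" "card (set (cols A))" "{}"]
      by (meson List.finite_set card_mono empty_iff empty_subsetI finite_lin_indpt2 rev_finite_subset)
    have rk: "rank A = card S" using rank_card_indpt[OF A S] .
    have Ssub: "S \<subseteq> set (cols A)" and Sli: "lin_indpt S" using S unfolding maximal_def by auto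
    have finS: "finite S" using Ssub finite_subset by blast
    obtain U where U: "U \<subseteq> {..<nc}" "inj_on (col A) U" "S = col A ` U"
      using Ssub unfolding setcols subset_image_inj by blast
    have "indep ?f {..<n} U"
    proof (rule indepI)
      fix c q assume h: "\<And>p. p \<in> {..<n} \<Longrightarrow> (\<Sum>q\<in>U. c q * ?f p q) = 0" and q: "q \<in> U"
      define a where "a = (\<lambda>v. c (the_inv_into U (col A) v))"
      have aj: "a (col A j) = c j" if "j \<in> U" for j
        unfolding a_def using the_inv_into_f_f[OF U(2) that] by simp
      have SC: "S \<subseteq> carrier_vec n" using Ssub colsub by blast
      have lc: "lincomb a S = 0\<^sub>v n"
      proof (rule eq_vecI)
        show "dim_vec (lincomb a S) = dim_vec (0\<^sub>v n)" using lincomb_dim[OF finS SC] by simp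
        fix i assume "i < dim_vec (0\<^sub>v n)"
        then have i: "i < n" by simp
        have "lincomb a S $ i = (\<Sum>x\<in>S. a x * x $ i)" using lincomb_index[OF i SC] .
        also have "\<dots> = (\<Sum>j\<in>U. a (col A j) * col A j $ i)"
          unfolding U(3) by (rule sum.reindex[OF U(2), unfolded comp_def])
        also have "\<dots> = (\<Sum>j\<in>U. c j * ?f i j)"
          by (rule sum.cong) (use aj colidx i U(1) in auto)
        also have "\<dots> = 0" using h i by simp
        finally show "lincomb a S $ i = 0\<^sub>v n $ i" using i by simp
      qed
      show "c q = 0"
      proof (rule ccontr)
        assume "c q \<noteq> 0"
        then have "a (col A q) \<noteq> 0" using aj[OF q] by simp
        moreover have "col A q \<in> S" using U(3) q by blast
        ultimately have "lin_dep S"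
          using lin_dep_crit[OF finS subset_refl, where a = a and v = "col A q"] lc by simp
        then show False using Sli by simp
      qed
    qed
    then have "card U \<le> crk ?f {..<n} {..<nc}" using crk_ge[of "{..<nc}" U] U(1) by blast
    moreover have "card S = card U" using U(2,3) card_image by blast
    ultimately show ?thesis using rk by simp
  qed
qed

end

lemma mrank_crk: "mrank A = crk (\<lambda>p q. A $$ (p,q)) {..<dim_row A} {..<dim_col A}"
  unfolding mrank_def by (rule vec_space.rank_crk) (rule carrier_matI; simp)

lemma crk_reindex:
  assumes "inj_on \<sigma> R" "inj_on \<tau> C" "finite C"
  shows "crk (\<lambda>p q. f (\<sigma> p) (\<tau> q)) R C = crk f (\<sigma> ` R) (\<tau> ` C)"
proof -
  have ind: "indep (\<lambda>p q. f (\<sigma> p) (\<tau> q)) R U = indep f (\<sigma> ` R) (\<tau> ` U)" if U: "U \<subseteq> C" for U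
  proof -
    have injU: "inj_on \<tau> U" using assms(2) U inj_on_subset by blast
    have s: "(\<Sum>q\<in>\<tau> ` U. c q * f p q) = (\<Sum>q\<in>U. c (\<tau> q) * f p (\<tau> q))" for c p
      using sum.reindex[OF injU] by (simp add: comp_def)
    show ?thesis
    proof
      assume iA: "indep (\<lambda>p q. f (\<sigma> p) (\<tau> q)) R U"
      show "indep f (\<sigma> ` R) (\<tau> ` U)"
      proof (rule indepI)
        fix c q assume h: "\<And>p. p \<in> \<sigma> ` R \<Longrightarrow> (\<Sum>q\<in>\<tau> ` U. c q * f p q) = 0" and q: "q \<in> \<tau> ` U"
        then obtain q' where q': "q' \<in> U" "q = \<tau> q'" by blast
        have "(c \<circ> \<tau>) q' = 0"
        proof (rule indepD[OF iA _ q'(1)])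
          fix p assume "p \<in> R"
          then show "(\<Sum>q\<in>U. (c \<circ> \<tau>) q * f (\<sigma> p) (\<tau> q)) = 0" using h[of "\<sigma> p"] s by simp
        qed
        then show "c q = 0" using q' by simp
      qed
    next
      assume iB: "indep f (\<sigma> ` R) (\<tau> ` U)"
      show "indep (\<lambda>p q. f (\<sigma> p) (\<tau> q)) R U"
      proof (rule indepI)
        fix c q assume h: "\<And>p. p \<in> R \<Longrightarrow> (\<Sum>q\<in>U. c q * f (\<sigma> p) (\<tau> q)) = 0" and q: "q \<in> U"
        define c' where "c' = (\<lambda>v. c (the_inv_into U \<tau> v))"
        have c': "c' (\<tau> j) = c j" if "j \<in> U" for j
          unfolding c'_def using the_inv_into_f_f[OF injU that] by simp
        have "c' (\<tau> q) = 0"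
        proof (rule indepD[OF iB _ imageI[OF q]])
          fix p assume "p \<in> \<sigma> ` R"
          then obtain p' where p': "p' \<in> R" "p = \<sigma> p'" by blast
          have "(\<Sum>q\<in>\<tau> ` U. c' q * f p q) = (\<Sum>q\<in>U. c' (\<tau> q) * f p (\<tau> q))" by (rule s)
          also have "\<dots> = (\<Sum>q\<in>U. c q * f (\<sigma> p') (\<tau> q))"
            by (rule sum.cong) (use c' p' in auto)
          finally show "(\<Sum>q\<in>\<tau> ` U. c' q * f p q) = 0" using h[OF p'(1)] by simp
        qed
        then show "c q = 0" using c'[OF q] by simp
      qed
    qed
  qed
  have "card ` {U. U \<subseteq> C \<and> indep (\<lambda>p q. f (\<sigma> p) (\<tau> q)) R U} = card ` {V. V \<subseteq> \<tau> ` C \<and> indep f (\<sigma> ` R) V}"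
  proof (intro Set.set_eqI iffI)
    fix k assume "k \<in> card ` {U. U \<subseteq> C \<and> indep (\<lambda>p q. f (\<sigma> p) (\<tau> q)) R U}"
    then obtain U where U: "U \<subseteq> C" "indep (\<lambda>p q. f (\<sigma> p) (\<tau> q)) R U" "k = card U" by blast
    have "card (\<tau> ` U) = card U" using card_image inj_on_subset[OF assms(2) U(1)] by blast
    moreover have "\<tau> ` U \<subseteq> \<tau> ` C" using U(1) by blast
    moreover have "indep f (\<sigma> ` R) (\<tau> ` U)" using ind[OF U(1)] U(2) by simp
    ultimately show "k \<in> card ` {V. V \<subseteq> \<tau> ` C \<and> indep f (\<sigma> ` R) V}" using U(3) by (metis (mono_tags, lifting) image_eqI mem_Collect_eq)
  next
    fix k assume "k \<in> card ` {V. V \<subseteq> \<tau> ` C \<and> indep f (\<sigma> ` R) V}"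
    then obtain V where V: "V \<subseteq> \<tau> ` C" "indep f (\<sigma> ` R) V" "k = card V" by blast
    obtain U where U: "U \<subseteq> C" "V = \<tau> ` U" using V(1) subset_imageE by blast
    have "card (\<tau> ` U) = card U" using card_image inj_on_subset[OF assms(2) U(1)] by blast
    moreover have "indep (\<lambda>p q. f (\<sigma> p) (\<tau> q)) R U" using ind[OF U(1)] V(2) U(2) by simp
    ultimately show "k \<in> card ` {U. U \<subseteq> C \<and> indep (\<lambda>p q. f (\<sigma> p) (\<tau> q)) R U}"
      using U V(3) by (metis (mono_tags, lifting) image_eqI mem_Collect_eq)
  qed
  then show ?thesis unfolding crk_def by simp
qed


lemma pick_inj_img:
  fixes m :: nat and I :: "nat set"
  defines "S \<equiv> {a. a < m \<and> a \<in> I}"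
  shows "inj_on (pick I) {..<card S}" "pick I ` {..<card S} = S"
proof -
  have eq: "pick I k = pick S k" if "k < card S" for k
    using pick_reduce_set[of k m I] that unfolding S_def by simp
  show inj: "inj_on (pick I) {..<card S}"
  proof (rule inj_onI)
    fix x y assume xy: "x \<in> {..<card S}" "y \<in> {..<card S}" "pick I x = pick I y"
    show "x = y"
    proof (rule ccontr)
      assume "x \<noteq> y"
      then have "x < y \<or> y < x" by arith
      then show False
        using pick_mono_le[of y S x] pick_mono_le[of x S y] xy eq by auto
    qed
  qed
  have sub: "pick I ` {..<card S} \<subseteq> S"
    using pick_in_set_le[of _ S] eq by auto
  have finS: "finite S" unfolding S_def by simp
  show "pick I ` {..<card S} = S"
    by (rule card_subset_eq[OF finS sub]) (simp add: card_image[OF inj])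
qed

lemma mrank_submatrix:
  "mrank (submatrix A I J) = crk (\<lambda>p q. A $$ (p,q)) (I \<inter> {..<dim_row A}) (J \<inter> {..<dim_col A})"
proof -
  let ?SI = "{i. i < dim_row A \<and> i \<in> I}" and ?SJ = "{j. j < dim_col A \<and> j \<in> J}"
  have "mrank (submatrix A I J) = crk (\<lambda>p q. submatrix A I J $$ (p,q)) {..<card ?SI} {..<card ?SJ}"
    unfolding mrank_crk dim_submatrix ..
  also have "\<dots> = crk (\<lambda>p q. A $$ (pick I p, pick J q)) {..<card ?SI} {..<card ?SJ}"
    by (rule crk_cong) (simp add: submatrix_index)
  also have "\<dots> = crk (\<lambda>p q. A $$ (p, q)) (pick I ` {..<card ?SI}) (pick J ` {..<card ?SJ})"
    by (rule crk_reindex[where f = "\<lambda>p q. A $$ (p, q)"]) (simp_all add: pick_inj_img)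
  also have "pick I ` {..<card ?SI} = I \<inter> {..<dim_row A}" using pick_inj_img(2)[where m="dim_row A" and I=I] by auto
  also have "pick J ` {..<card ?SJ} = J \<inter> {..<dim_col A}" using pick_inj_img(2)[where m="dim_col A" and I=J] by auto
  finally show ?thesis .
qed


definition zmat :: "'a::field mat \<Rightarrow> nat \<Rightarrow> nat \<Rightarrow> 'a mat" where
  "zmat S Y X = four_block_mat S (1\<^sub>m Y) (1\<^sub>m X) (0\<^sub>m X Y)"

lemma zmat_dims: "S \<in> carrier_mat Y X \<Longrightarrow> dim_row (zmat S Y X) = Y + X \<and> dim_col (zmat S Y X) = X + Y"
  unfolding zmat_def by auto

lemma zmat_idx:
  assumes S: "S \<in> carrier_mat Y X" and p: "p < Y + X" and q: "q < X + Y"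
  shows "zmat S Y X $$ (p,q) = (if p < Y then (if q < X then S $$ (p,q) else (if p = q - X then 1 else 0))
     else (if q < X then (if p - Y = q then 1 else 0) else 0))"
  using S p q unfolding zmat_def by (auto simp: index_mat_four_block)

lemma img_add_lessThan: "(\<lambda>p. X + p) ` {..<b} = {X..<X+(b::nat)}"
proof (rule Set.set_eqI)
  fix x show "x \<in> (\<lambda>p. X + p) ` {..<b} \<longleftrightarrow> x \<in> {X..<X+b}"
  proof
    assume "x \<in> {X..<X+b}" then have "x = X + (x - X)" "x - X < b" by auto
    then show "x \<in> (\<lambda>p. X + p) ` {..<b}" by blast
  qed auto
qed

lemma img_add_atLeastLessThan: "(\<lambda>p. X + p) ` {a..<b} = {X+a..<X+(b::nat)}"
proof (rule Set.set_eqI)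
  fix x show "x \<in> (\<lambda>p. X + p) ` {a..<b} \<longleftrightarrow> x \<in> {X+a..<X+b}"
  proof
    assume "x \<in> {X+a..<X+b}" then have "x = X + (x - X)" "x - X \<in> {a..<b}" by auto
    then show "x \<in> (\<lambda>p. X + p) ` {a..<b}" by blast
  qed auto
qed

lemma zmat_rank:
  fixes S :: "'a::field mat"
  assumes S: "S \<in> carrier_mat Y X" and a: "a \<le> Y + X" and c: "c \<le> X + Y"
  shows "mrank (submatrix (zmat S Y X) {..<a} {..<c}) =
     min (min a Y) (c - X) + min (a - Y) (min c X) +
     crk (\<lambda>p q. S $$ (p,q)) {c - X..<min a Y} {a - Y..<min c X}"
proof -
  define ya where "ya = min a Y"
  define xa where "xa = a - Y"
  define xc where "xc = min c X"
  define yc where "yc = c - X"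
  define z where "z = (\<lambda>p q. zmat S Y X $$ (p,q))"
  have zidx: "z p q = (if p < Y then (if q < X then S $$ (p,q) else (if p = q - X then 1 else 0))
     else (if q < X then (if p - Y = q then 1 else 0) else 0))" if "p < Y + X" "q < X + Y" for p q
    unfolding z_def by (rule zmat_idx[OF S that])
  have "mrank (submatrix (zmat S Y X) {..<a} {..<c}) = crk z ({..<a} \<inter> {..<Y+X}) ({..<c} \<inter> {..<X+Y})"
    unfolding mrank_submatrix z_def using zmat_dims[OF S] by simp
  also have "{..<a} \<inter> {..<Y+X} = ({..<ya} \<union> (\<lambda>q. Y + q) ` {..<min xa xc}) \<union> (\<lambda>q. Y + q) ` {min xa xc..<xa}"
  proof (rule Set.set_eqI)
    fix p
    show "p \<in> {..<a} \<inter> {..<Y+X} \<longleftrightarrow> p \<in> ({..<ya} \<union> (\<lambda>q. Y + q) ` {..<min xa xc}) \<union> (\<lambda>q. Y + q) ` {min xa xc..<xa}"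
    proof
      assume "p \<in> {..<a} \<inter> {..<Y+X}"
      then show "p \<in> ({..<ya} \<union> (\<lambda>q. Y + q) ` {..<min xa xc}) \<union> (\<lambda>q. Y + q) ` {min xa xc..<xa}"
      proof (cases "p < Y")
        case False
        then have "p = Y + (p - Y)" "p - Y < xa" using \<open>p \<in> {..<a} \<inter> {..<Y+X}\<close> unfolding xa_def by auto
        then show ?thesis by (cases "p - Y < min xa xc") force+
      qed (use \<open>p \<in> {..<a} \<inter> {..<Y+X}\<close> ya_def in auto)
    next
      assume "p \<in> ({..<ya} \<union> (\<lambda>q. Y + q) ` {..<min xa xc}) \<union> (\<lambda>q. Y + q) ` {min xa xc..<xa}"
      then show "p \<in> {..<a} \<inter> {..<Y+X}" unfolding ya_def xa_def xc_def using a by auto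
    qed
  qed
  also have "{..<c} \<inter> {..<X+Y} = {..<xc} \<union> (\<lambda>p. X + p) ` {..<yc}"
  proof (rule Set.set_eqI)
    fix q
    show "q \<in> {..<c} \<inter> {..<X+Y} \<longleftrightarrow> q \<in> {..<xc} \<union> (\<lambda>p. X + p) ` {..<yc}"
    proof
      assume q: "q \<in> {..<c} \<inter> {..<X+Y}"
      show "q \<in> {..<xc} \<union> (\<lambda>p. X + p) ` {..<yc}"
      proof (cases "q < X")
        case False
        then have "q = X + (q - X)" "q - X < yc" using q unfolding yc_def by auto
        then show ?thesis by blast
      qed (use q xc_def in auto)
    next
      assume "q \<in> {..<xc} \<union> (\<lambda>p. X + p) ` {..<yc}"
      then show "q \<in> {..<c} \<inter> {..<X+Y}" unfolding yc_def xc_def using c by auto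
    qed
  qed
  also have "crk z (({..<ya} \<union> (\<lambda>q. Y + q) ` {..<min xa xc}) \<union> (\<lambda>q. Y + q) ` {min xa xc..<xa}) ({..<xc} \<union> (\<lambda>p. X + p) ` {..<yc})
      = crk z ({..<ya} \<union> (\<lambda>q. Y + q) ` {..<min xa xc}) ({..<xc} \<union> (\<lambda>p. X + p) ` {..<yc})"
  proof (rule crk_zero_rows)
    fix p q assume p: "p \<in> (\<lambda>q. Y + q) ` {min xa xc..<xa}" and q: "q \<in> {..<xc} \<union> (\<lambda>p. X + p) ` {..<yc}"
    have "p < Y + X" "q < X + Y" using p q a c unfolding xa_def xc_def yc_def by auto
    then show "z p q = 0" using p q unfolding zidx[OF \<open>p < Y + X\<close> \<open>q < X + Y\<close>] by auto
  qed
  also have "\<dots> = card ((\<lambda>q. Y + q) ` {..<min xa xc}) + crk z ({..<ya} \<union> (\<lambda>q. Y + q) ` {..<min xa xc} - (\<lambda>q. Y + q) ` {..<min xa xc})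
      ({..<xc} \<union> (\<lambda>p. X + p) ` {..<yc} - (\<lambda>p. p - Y) ` (\<lambda>q. Y + q) ` {..<min xa xc})"
  proof (rule crk_unit_rows)
    show "inj_on (\<lambda>p. p - Y) ((\<lambda>q. Y + q) ` {..<min xa xc})" by (auto simp: inj_on_def)
    show "(\<lambda>p. p - Y) ` (\<lambda>q. Y + q) ` {..<min xa xc} \<subseteq> {..<xc} \<union> (\<lambda>p. X + p) ` {..<yc}" by auto
    fix p assume p: "p \<in> (\<lambda>q. Y + q) ` {..<min xa xc}"
    have pq: "p < Y + X" "p - Y < X + Y" using p a unfolding xa_def xc_def by auto
    show "z p (p - Y) \<noteq> 0" using p unfolding zidx[OF pq] xc_def by auto
    fix q assume q: "q \<in> {..<xc} \<union> (\<lambda>p. X + p) ` {..<yc}" "q \<noteq> p - Y"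
    have qq: "q < X + Y" using q c unfolding xc_def yc_def by auto
    show "z p q = 0" using p q unfolding zidx[OF pq(1) qq] xc_def by auto
  qed auto
  also have "card ((\<lambda>q. Y + q) ` {..<min xa xc}) = min xa xc" by (simp add: card_image)
  also have "{..<ya} \<union> (\<lambda>q. Y + q) ` {..<min xa xc} - (\<lambda>q. Y + q) ` {..<min xa xc} = {..<ya}"
    unfolding ya_def by auto
  also have "{..<xc} \<union> (\<lambda>p. X + p) ` {..<yc} - (\<lambda>p. p - Y) ` (\<lambda>q. Y + q) ` {..<min xa xc}
     = {xa..<xc} \<union> (\<lambda>p. X + p) ` {..<min ya yc} \<union> (\<lambda>p. X + p) ` {min ya yc..<yc}"
  proof -
    have e: "(\<lambda>p. p - Y) ` (\<lambda>q. Y + q) ` {..<min xa xc} = {..<min xa xc}" unfolding image_image by simp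
    have e2: "{..<xc} - {..<min xa xc} = {xa..<xc}" unfolding xc_def by auto
    have e3: "(\<lambda>p. X + p) ` {..<yc} = (\<lambda>p. X + p) ` {..<min ya yc} \<union> (\<lambda>p. X + p) ` {min ya yc..<yc}"
      unfolding img_add_lessThan img_add_atLeastLessThan by auto
    have e4: "(\<lambda>p. X + p) ` {..<yc} \<inter> {..<min xa xc} = {}" unfolding img_add_lessThan xc_def by auto
    show ?thesis unfolding e using e2 e3 e4 by blast
  qed
  also have "crk z {..<ya} ({xa..<xc} \<union> (\<lambda>p. X + p) ` {..<min ya yc} \<union> (\<lambda>p. X + p) ` {min ya yc..<yc})
     = crk z {..<ya} ({xa..<xc} \<union> (\<lambda>p. X + p) ` {..<min ya yc})"
  proof (rule crk_zero_cols)
    fix p q assume p: "p \<in> {..<ya}" and q: "q \<in> (\<lambda>p. X + p) ` {min ya yc..<yc}"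
    have pq: "p < Y + X" "q < X + Y" using p q c unfolding ya_def yc_def by auto
    show "z p q = 0" using p q unfolding zidx[OF pq] ya_def by auto
  qed auto
  also have "\<dots> = card ((\<lambda>p. X + p) ` {..<min ya yc}) + crk z ({..<ya} - (\<lambda>q. q - X) ` (\<lambda>p. X + p) ` {..<min ya yc})
      ({xa..<xc} \<union> (\<lambda>p. X + p) ` {..<min ya yc} - (\<lambda>p. X + p) ` {..<min ya yc})"
  proof (rule crk_unit_cols)
    show "inj_on (\<lambda>q. q - X) ((\<lambda>p. X + p) ` {..<min ya yc})" by (auto simp: inj_on_def)
    show "(\<lambda>q. q - X) ` (\<lambda>p. X + p) ` {..<min ya yc} \<subseteq> {..<ya}" by auto
    fix q assume q: "q \<in> (\<lambda>p. X + p) ` {..<min ya yc}"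
    have pq: "q - X < Y + X" "q < X + Y" using q unfolding ya_def by auto
    show "z (q - X) q \<noteq> 0" using q unfolding zidx[OF pq] ya_def by auto
    fix p assume p: "p \<in> {..<ya}" "p \<noteq> q - X"
    have pp: "p < Y + X" using p unfolding ya_def by auto
    show "z p q = 0" using p q unfolding zidx[OF pp pq(2)] ya_def by auto
  qed auto
  also have "card ((\<lambda>p. X + p) ` {..<min ya yc}) = min ya yc" by (simp add: card_image)
  also have "{..<ya} - (\<lambda>q. q - X) ` (\<lambda>p. X + p) ` {..<min ya yc} = {yc..<ya}"
  proof -
    have e: "(\<lambda>q. q - X) ` (\<lambda>p. X + p) ` {..<min ya yc} = {..<min ya yc}" unfolding image_image by simp
    show ?thesis unfolding e by auto
  qed
  also have "{xa..<xc} \<union> (\<lambda>p. X + p) ` {..<min ya yc} - (\<lambda>p. X + p) ` {..<min ya yc} = {xa..<xc}"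
    unfolding xc_def by auto
  also have "crk z {yc..<ya} {xa..<xc} = crk (\<lambda>p q. S $$ (p,q)) {yc..<ya} {xa..<xc}"
  proof (rule crk_cong)
    fix p q assume "p \<in> {yc..<ya}" "q \<in> {xa..<xc}"
    then have "p < Y" "q < X" unfolding ya_def xc_def by auto
    then show "z p q = S $$ (p,q)" using zidx[of p q] by simp
  qed
  finally show ?thesis unfolding ya_def xa_def xc_def yc_def by (simp add: ac_simps)
qed


declare upt_Suc[simp del]

lemma yoff_Suc: "yoff dy (Suc k) = yoff dy k + dy k"
  unfolding yoff_def by simp

lemma yoff_mono: "i \<le> j \<Longrightarrow> yoff dy i \<le> yoff dy j"
  unfolding yoff_def by (rule sum_mono2) auto

lemma yblock_unique:
  assumes "p \<in> {yoff dy k..<yoff dy (Suc k)}" "p \<in> {yoff dy k'..<yoff dy (Suc k')}"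
  shows "k = k'"
proof (rule ccontr)
  assume "k \<noteq> k'"
  then have "Suc k \<le> k' \<or> Suc k' \<le> k" by arith
  then show False
    using yoff_mono[of "Suc k" k' dy] yoff_mono[of "Suc k'" k dy] assms by auto
qed

lemma yrange:
  "p \<in> {yoff dy b..<yoff dy e} \<longleftrightarrow> (\<exists>k. b \<le> k \<and> k < e \<and> p \<in> {yoff dy k..<yoff dy (Suc k)})"
proof (induction e)
  case 0
  then show ?case using yoff_mono[of 0 b dy] by auto
next
  case (Suc e)
  show ?case
  proof (cases "b \<le> e")
    case True
    have "p \<in> {yoff dy b..<yoff dy (Suc e)} \<longleftrightarrow> p \<in> {yoff dy b..<yoff dy e} \<or> p \<in> {yoff dy e..<yoff dy (Suc e)}"
      using yoff_mono[OF True, of dy] yoff_mono[of e "Suc e" dy] by auto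
    also have "\<dots> \<longleftrightarrow> (\<exists>k. b \<le> k \<and> k < Suc e \<and> p \<in> {yoff dy k..<yoff dy (Suc k)})"
      unfolding Suc.IH using True less_Suc_eq by auto
    finally show ?thesis .
  next
    case False
    then show ?thesis using yoff_mono[of "Suc e" b dy] by auto
  qed
qed

lemma xoff_rec: "i < n \<Longrightarrow> xoff n dx i = xoff n dx (Suc i) + dx (Suc i)"
proof -
  assume "i < n"
  then have "{i<..n} = insert (Suc i) {Suc i<..n}" by auto
  then show ?thesis unfolding xoff_def by simp
qed

lemma xoff_anti: "i \<le> j \<Longrightarrow> xoff n dx j \<le> xoff n dx i"
  unfolding xoff_def by (rule sum_mono2) auto

lemma xoff_n[simp]: "xoff n dx n = 0"
  unfolding xoff_def by simp

lemma xblock_alt: "1 \<le> i \<Longrightarrow> i \<le> n \<Longrightarrow> xoff n dx i + dx i = xoff n dx (i - 1)"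
  using xoff_rec[of "i - 1" n dx] by simp

lemma xblock_unique:
  assumes "q \<in> {xoff n dx i..<xoff n dx i + dx i}" "q \<in> {xoff n dx i'..<xoff n dx i' + dx i'}"
    "1 \<le> i" "i \<le> n" "1 \<le> i'" "i' \<le> n"
  shows "i = i'"
proof (rule ccontr)
  assume "i \<noteq> i'"
  then have "i \<le> i' - 1 \<or> i' \<le> i - 1" by arith
  then show False
    using xoff_anti[of i "i' - 1" n dx] xoff_anti[of i' "i - 1" n dx] assms xblock_alt[of i n dx]
      xblock_alt[of i' n dx] by auto
qed

lemma xrange:
  "t1 \<le> n \<Longrightarrow> q \<in> {xoff n dx t1..<xoff n dx t2} \<longleftrightarrow> (\<exists>i. t2 < i \<and> i \<le> t1 \<and> q \<in> {xoff n dx i..<xoff n dx i + dx i})"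
proof (induction t1)
  case 0
  then show ?case using xoff_anti[of 0 t2 n dx] by auto
next
  case (Suc t1)
  show ?case
  proof (cases "t2 \<le> t1")
    case True
    have r: "xoff n dx t1 = xoff n dx (Suc t1) + dx (Suc t1)" using xoff_rec[of t1 n dx] Suc.prems by simp
    have "q \<in> {xoff n dx (Suc t1)..<xoff n dx t2} \<longleftrightarrow> q \<in> {xoff n dx (Suc t1)..<xoff n dx (Suc t1) + dx (Suc t1)} \<or> q \<in> {xoff n dx t1..<xoff n dx t2}"
      using xoff_anti[OF True, of n dx] r by auto
    also have "\<dots> \<longleftrightarrow> (\<exists>i. t2 < i \<and> i \<le> Suc t1 \<and> q \<in> {xoff n dx i..<xoff n dx i + dx i})"
      (is "?A \<or> ?B \<longleftrightarrow> ?C")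
    proof
      assume "?A \<or> ?B"
      then show ?C
      proof
        assume ?A then show ?C using True by (intro exI[of _ "Suc t1"]) auto
      next
        assume ?B then show ?C unfolding Suc.IH[OF Suc_leD[OF Suc.prems]] by (auto simp: le_Suc_eq)
      qed
    next
      assume ?C
      then obtain i where i: "t2 < i" "i \<le> Suc t1" "q \<in> {xoff n dx i..<xoff n dx i + dx i}" by blast
      show "?A \<or> ?B"
      proof (cases "i = Suc t1")
        case True then show ?thesis using i by simp
      next
        case False
        then have "i \<le> t1" using i(2) by simp
        then have ?B unfolding Suc.IH[OF Suc_leD[OF Suc.prems]] using i by blast
        then show ?thesis ..
      qed
    qed
    finally show ?thesis .
  next
    case False
    then show ?thesis using xoff_anti[of "Suc t1" t2 n dx] by auto
  qed
qed

lemma dimY_yoff: "dimY n dy = yoff dy (Suc n)"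
  unfolding dimY_def yoff_def by (simp add: lessThan_Suc_atMost)

lemma dimX_xoff: "dimX n dx = xoff n dx 0"
  unfolding dimX_def xoff_def by (rule sum.cong) auto

lemma sl_y: "i \<le> Suc n \<Longrightarrow> sum_list (take i (map dy [0..<Suc n])) = yoff dy i"
proof -
  assume i: "i \<le> Suc n"
  have "take i (map dy [0..<Suc n]) = map dy [0..<i]" using i by (simp add: take_map take_upt del: upt_Suc)
  moreover have "sum_list (map dy [0..<i]) = yoff dy i" by (induction i) (simp_all add: yoff_def upt_Suc)
  ultimately show ?thesis by simp
qed

lemma sl_x: "a \<le> n \<Longrightarrow> sum_list (take a (map dx (rev [1..<Suc n]))) = xoff n dx (n - a)"
proof (induction a)
  case 0 then show ?case by simp
next
  case (Suc a)
  have "rev [1..<Suc n] ! a = n - a" using Suc.prems by (simp add: rev_nth del: upt_Suc)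
  then have "take (Suc a) (map dx (rev [1..<Suc n])) = take a (map dx (rev [1..<Suc n])) @ [dx (n - a)]"
    using Suc.prems by (simp add: take_Suc_conv_app_nth del: upt_Suc)
  moreover have "xoff n dx (n - Suc a) = xoff n dx (n - a) + dx (n - a)"
    using xoff_rec[of "n - Suc a" n dx] Suc.prems by (simp add: Suc_diff_Suc)
  ultimately show ?case using Suc by simp
qed

definition eI :: "nat \<Rightarrow> nat \<Rightarrow> nat" where "eI n i = min i (Suc n)"
definition t1I :: "nat \<Rightarrow> nat \<Rightarrow> nat" where "t1I n i = (if i \<le> Suc n then n else 2*n+1-i)"
definition bJ :: "nat \<Rightarrow> nat \<Rightarrow> nat" where "bJ n j = j - n"
definition t2J :: "nat \<Rightarrow> nat \<Rightarrow> nat" where "t2J n j = n - min j n"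

lemma RS_eq:
  assumes "i \<le> 2*n+1"
  shows "sum_list (take i (row_blocks n dx dy)) = yoff dy (eI n i) + xoff n dx (t1I n i)"
proof -
  have "sum_list (take i (row_blocks n dx dy)) = sum_list (take i (map dy [0..<Suc n])) + sum_list (take (i - Suc n) (map dx (rev [1..<Suc n])))"
    unfolding row_blocks_def by simp
  also have "\<dots> = yoff dy (eI n i) + xoff n dx (t1I n i)"
  proof (cases "i \<le> Suc n")
    case True then show ?thesis using sl_y[OF True] by (simp add: eI_def t1I_def)
  next
    case False
    have "take i (map dy [0..<Suc n]) = map dy [0..<Suc n]" using False by simp
    then have "sum_list (take i (map dy [0..<Suc n])) = yoff dy (Suc n)" using sl_y[of "Suc n" n dy] by simp
    moreover have "sum_list (take (i - Suc n) (map dx (rev [1..<Suc n]))) = xoff n dx (n - (i - Suc n))"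
      using sl_x[of "i - Suc n" n dx] assms by simp
    moreover have "n - (i - Suc n) = 2*n+1-i" using False assms by simp
    ultimately show ?thesis using False by (simp add: eI_def t1I_def)
  qed
  finally show ?thesis .
qed

lemma CS_eq:
  assumes "j \<le> 2*n+1"
  shows "sum_list (take j (col_blocks n dx dy)) = xoff n dx (t2J n j) + yoff dy (bJ n j)"
proof -
  have "sum_list (take j (col_blocks n dx dy)) = sum_list (take j (map dx (rev [1..<Suc n]))) + sum_list (take (j - n) (map dy [0..<Suc n]))"
    unfolding col_blocks_def by simp
  also have "\<dots> = xoff n dx (t2J n j) + yoff dy (bJ n j)"
  proof (cases "j \<le> n")
    case True then show ?thesis using sl_x[OF True] by (simp add: bJ_def t2J_def yoff_def)
  next
    case False
    have "take j (map dx (rev [1..<Suc n])) = map dx (rev [1..<Suc n])" using False by simp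
    then have "sum_list (take j (map dx (rev [1..<Suc n]))) = xoff n dx 0" using sl_x[of n n dx] by simp
    moreover have "sum_list (take (j - n) (map dy [0..<Suc n])) = yoff dy (j - n)"
      using sl_y[of "j - n" n dy] assms by simp
    ultimately show ?thesis using False by (simp add: bJ_def t2J_def)
  qed
  finally show ?thesis .
qed

lemma topleft_rank:
  fixes S :: "'a::field mat"
  assumes S: "S \<in> carrier_mat (dimY n dy) (dimX n dx)" and i: "i \<le> 2*n+1" and j: "j \<le> 2*n+1"
  shows "mrank (topleft n dx dy (zmat S (dimY n dy) (dimX n dx)) i j) =
    min (yoff dy (eI n i)) (yoff dy (bJ n j)) + min (xoff n dx (t1I n i)) (xoff n dx (t2J n j)) +
    crk (\<lambda>p q. S $$ (p,q)) {yoff dy (bJ n j)..<yoff dy (eI n i)} {xoff n dx (t1I n i)..<xoff n dx (t2J n j)}"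
proof -
  let ?Y = "dimY n dy" and ?X = "dimX n dx"
  define a where "a = yoff dy (eI n i) + xoff n dx (t1I n i)"
  define c where "c = xoff n dx (t2J n j) + yoff dy (bJ n j)"
  have Y: "?Y = yoff dy (Suc n)" by (rule dimY_yoff)
  have X: "?X = xoff n dx 0" by (rule dimX_xoff)
  have e1: "min a ?Y = yoff dy (eI n i)" "a - ?Y = xoff n dx (t1I n i)"
  proof -
    have "min a ?Y = yoff dy (eI n i) \<and> a - ?Y = xoff n dx (t1I n i)"
    proof (cases "i \<le> Suc n")
      case True
      then have "yoff dy (eI n i) \<le> ?Y" unfolding Y eI_def by (intro yoff_mono) simp
      then show ?thesis using True unfolding a_def t1I_def by simp
    next
      case False then show ?thesis unfolding a_def eI_def Y by simp
    qed
    then show "min a ?Y = yoff dy (eI n i)" "a - ?Y = xoff n dx (t1I n i)" by auto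
  qed
  have e2: "min c ?X = xoff n dx (t2J n j)" "c - ?X = yoff dy (bJ n j)"
  proof -
    have "min c ?X = xoff n dx (t2J n j) \<and> c - ?X = yoff dy (bJ n j)"
    proof (cases "j \<le> n")
      case True
      then have "xoff n dx (t2J n j) \<le> ?X" unfolding X by (intro xoff_anti) simp
      moreover have "yoff dy (bJ n j) = 0" using True unfolding bJ_def yoff_def by simp
      ultimately show ?thesis unfolding c_def by simp
    next
      case False then show ?thesis unfolding c_def t2J_def X by simp
    qed
    then show "min c ?X = xoff n dx (t2J n j)" "c - ?X = yoff dy (bJ n j)" by auto
  qed
  have aY: "a \<le> ?Y + ?X"
  proof -
    have "a = min a ?Y + (a - ?Y)" by simp
    also have "\<dots> \<le> ?Y + ?X" unfolding e1 X using xoff_anti[of 0 "t1I n i" n dx] yoff_mono[of "eI n i" "Suc n" dy]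
      unfolding Y eI_def by simp
    finally show ?thesis .
  qed
  have cX: "c \<le> ?X + ?Y"
  proof -
    have "c = min c ?X + (c - ?X)" by simp
    also have "\<dots> \<le> ?X + ?Y"
    proof -
      have "bJ n j \<le> Suc n" using j unfolding bJ_def by simp
      then show ?thesis unfolding e2 using xoff_anti[of 0 "t2J n j" n dx] yoff_mono[of "bJ n j" "Suc n" dy]
        unfolding X Y by simp
    qed
    finally show ?thesis .
  qed
  have "topleft n dx dy (zmat S ?Y ?X) i j = submatrix (zmat S ?Y ?X) {..<a} {..<c}"
    unfolding topleft_def a_def c_def RS_eq[OF i] CS_eq[OF j] ..
  then show ?thesis using zmat_rank[OF S aY cX] unfolding e1 e2 by (simp add: min.commute)
qed


definition supp :: "nat \<Rightarrow> (nat \<Rightarrow> nat) \<Rightarrow> (nat \<Rightarrow> nat) \<Rightarrow> (nat \<Rightarrow> nat \<Rightarrow> 'a::zero) \<Rightarrow> bool" where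
  "supp n dx dy m \<longleftrightarrow> (\<forall>p q. p < dimY n dy \<longrightarrow> q < dimX n dx \<longrightarrow> m p q \<noteq> 0 \<longrightarrow>
     (\<exists>k i. 1 \<le> i \<and> i \<le> n \<and> (k = i - 1 \<or> k = i) \<and> p \<in> {yoff dy k..<yoff dy (Suc k)} \<and>
        q \<in> {xoff n dx i..<xoff n dx i + dx i}))"

definition RJ :: "nat \<Rightarrow> (nat \<Rightarrow> nat) \<Rightarrow> nat \<times> nat \<Rightarrow> nat set" where
  "RJ n dy J = (\<Union>i\<in>{i. i \<le> n \<and> fst J \<le> 2 * i \<and> 2 * i \<le> snd J}. {yoff dy i..<yoff dy (Suc i)})"

definition CJ :: "nat \<Rightarrow> (nat \<Rightarrow> nat) \<Rightarrow> nat \<times> nat \<Rightarrow> nat set" where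
  "CJ n dx J = (\<Union>i\<in>{i. 1 \<le> i \<and> i \<le> n \<and> fst J \<le> 2 * i - 1 \<and> 2 * i - 1 \<le> snd J}.
          {xoff n dx i..<xoff n dx i + dx i})"

lemma MJ_eq: "MJ n dx dy V J = submatrix (MQ n dx dy V) (RJ n dy J) (CJ n dx J)"
  unfolding MJ_def RJ_def CJ_def ..

lemma MQ_dims: "dim_row (MQ n dx dy V) = dimY n dy" "dim_col (MQ n dx dy V) = dimX n dx"
  unfolding MQ_def by simp_all

lemma RJ_sub: "RJ n dy J \<subseteq> {..<dimY n dy}"
proof
  fix p assume "p \<in> RJ n dy J"
  then obtain i where i: "i \<le> n" "p < yoff dy (Suc i)" unfolding RJ_def by auto
  then show "p \<in> {..<dimY n dy}" using yoff_mono[of "Suc i" "Suc n" dy] unfolding dimY_yoff by simp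
qed

lemma CJ_sub: "CJ n dx J \<subseteq> {..<dimX n dx}"
proof
  fix q assume "q \<in> CJ n dx J"
  then obtain i where i: "1 \<le> i" "i \<le> n" "q < xoff n dx i + dx i" unfolding CJ_def by auto
  then show "q \<in> {..<dimX n dx}" using xoff_anti[of 0 "i - 1" n dx] xblock_alt[of i n dx] unfolding dimX_xoff by simp
qed

lemma mrank_MJ: "mrank (MJ n dx dy V J) = crk (\<lambda>p q. MQ n dx dy V $$ (p,q)) (RJ n dy J) (CJ n dx J)"
proof -
  have "RJ n dy J \<inter> {..<dimY n dy} = RJ n dy J" "CJ n dx J \<inter> {..<dimX n dx} = CJ n dx J"
    using RJ_sub CJ_sub by blast+
  then show ?thesis unfolding MJ_eq mrank_submatrix MQ_dims by simp
qed

lemma mem_rows: "p \<in> {yoff dy k..<yoff dy (Suc k)} \<Longrightarrow> p \<in> {yoff dy b..<yoff dy e} \<longleftrightarrow> b \<le> k \<and> k < e"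
  using yrange[of p dy b e] yblock_unique[of p dy k] by blast

lemma mem_RJ: "p \<in> {yoff dy k..<yoff dy (Suc k)} \<Longrightarrow> p \<in> RJ n dy J \<longleftrightarrow> k \<le> n \<and> fst J \<le> 2 * k \<and> 2 * k \<le> snd J"
  unfolding RJ_def using yblock_unique[of p dy k] by blast

lemma mem_cols:
  assumes "t1 \<le> n" "1 \<le> i" "i \<le> n" "q \<in> {xoff n dx i..<xoff n dx i + dx i}"
  shows "q \<in> {xoff n dx t1..<xoff n dx t2} \<longleftrightarrow> t2 < i \<and> i \<le> t1"
proof
  assume "q \<in> {xoff n dx t1..<xoff n dx t2}"
  then obtain i' where i': "t2 < i'" "i' \<le> t1" "q \<in> {xoff n dx i'..<xoff n dx i' + dx i'}"
    using xrange[OF assms(1)] by blast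
  have "i' = i" by (rule xblock_unique[OF i'(3) assms(4)]) (use i' assms in auto)
  then show "t2 < i \<and> i \<le> t1" using i' by simp
next
  assume "t2 < i \<and> i \<le> t1"
  then show "q \<in> {xoff n dx t1..<xoff n dx t2}" using xrange[OF assms(1)] assms(4) by blast
qed

lemma mem_CJ:
  assumes "1 \<le> i" "i \<le> n" "q \<in> {xoff n dx i..<xoff n dx i + dx i}"
  shows "q \<in> CJ n dx J \<longleftrightarrow> fst J \<le> 2 * i - 1 \<and> 2 * i - 1 \<le> snd J"
proof
  assume "q \<in> CJ n dx J"
  then obtain i' where i': "1 \<le> i'" "i' \<le> n" "fst J \<le> 2 * i' - 1" "2 * i' - 1 \<le> snd J"
    "q \<in> {xoff n dx i'..<xoff n dx i' + dx i'}" unfolding CJ_def by blast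
  have "i' = i" by (rule xblock_unique[OF i'(5) assms(3) i'(1,2) assms(1,2)])
  then show "fst J \<le> 2 * i - 1 \<and> 2 * i - 1 \<le> snd J" using i' by simp
next
  assume "fst J \<le> 2 * i - 1 \<and> 2 * i - 1 \<le> snd J"
  then show "q \<in> CJ n dx J" unfolding CJ_def using assms by blast
qed

lemma rect_arith:
  fixes i n k e t1 b t2 :: nat
  assumes "1 \<le> i" "i \<le> n" "k = i - 1 \<or> k = i" "e \<le> Suc n" "t1 \<le> n"
  shows "(b \<le> k \<and> k < e \<and> t2 < i \<and> i \<le> t1) \<longleftrightarrow>
    (k \<le> n \<and> max (2*b-1) (2*t2) \<le> 2 * k \<and> 2 * k \<le> min (2*e-1) (2*t1) \<and>
     max (2*b-1) (2*t2) \<le> 2 * i - 1 \<and> 2 * i - 1 \<le> min (2*e-1) (2*t1))"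
  using assms(3) 
proof
  assume k: "k = i - 1"
  show ?thesis unfolding k using assms(1,2,4,5) by (simp only: max.bounded_iff min.bounded_iff) (intro iffI; elim conjE; intro conjI TrueI; linarith)
next
  assume k: "k = i"
  show ?thesis unfolding k using assms(1,2,4,5) by (simp only: max.bounded_iff min.bounded_iff) (intro iffI; elim conjE; intro conjI TrueI; linarith)
qed

lemma rows_lt: "e \<le> Suc n \<Longrightarrow> p \<in> {yoff dy b..<yoff dy e} \<Longrightarrow> p < dimY n dy"
  using yoff_mono[of e "Suc n" dy] unfolding dimY_yoff by auto

lemma cols_lt: "q \<in> {xoff n dx t1..<xoff n dx t2} \<Longrightarrow> q < dimX n dx"
  using xoff_anti[of 0 t2 n dx] unfolding dimX_xoff by auto

lemma crk_rect:
  assumes sp: "supp n dx dy m" and e: "e \<le> Suc n" and t1: "t1 \<le> n"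
  shows "max (2*b-1) (2*t2) \<le> min (2*e-1) (2*t1) \<Longrightarrow>
      crk m {yoff dy b..<yoff dy e} {xoff n dx t1..<xoff n dx t2} =
      crk m (RJ n dy (max (2*b-1) (2*t2), min (2*e-1) (2*t1))) (CJ n dx (max (2*b-1) (2*t2), min (2*e-1) (2*t1)))"
    and "\<not> max (2*b-1) (2*t2) \<le> min (2*e-1) (2*t1) \<Longrightarrow>
      crk m {yoff dy b..<yoff dy e} {xoff n dx t1..<xoff n dx t2} = 0"
proof -
  define L where "L = max (2*b-1) (2*t2)"
  define H where "H = min (2*e-1) (2*t1)"
  have key: "(p \<in> {yoff dy b..<yoff dy e} \<and> q \<in> {xoff n dx t1..<xoff n dx t2}) \<longleftrightarrow>
      (p \<in> RJ n dy (L, H) \<and> q \<in> CJ n dx (L, H))"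
    if "1 \<le> i" "i \<le> n" "k = i - 1 \<or> k = i" "p \<in> {yoff dy k..<yoff dy (Suc k)}"
       "q \<in> {xoff n dx i..<xoff n dx i + dx i}" for p q k i
    unfolding mem_rows[OF that(4)] mem_RJ[OF that(4)] mem_cols[OF t1 that(1,2,5)] mem_CJ[OF that(1,2,5)]
    using rect_arith[OF that(1-3) e t1, of b t2] unfolding L_def H_def by simp
  have supE: "\<exists>k i. 1 \<le> i \<and> i \<le> n \<and> (k = i - 1 \<or> k = i) \<and> p \<in> {yoff dy k..<yoff dy (Suc k)} \<and>
        q \<in> {xoff n dx i..<xoff n dx i + dx i}" if "p < dimY n dy" "q < dimX n dx" "m p q \<noteq> 0" for p q
    using sp that unfolding supp_def by blast
  {
    assume "L \<le> H"
    have "crk m {yoff dy b..<yoff dy e} {xoff n dx t1..<xoff n dx t2} = crk m (RJ n dy (L, H)) (CJ n dx (L, H))"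
    proof (rule crk_support2)
      show "finite {xoff n dx t1..<xoff n dx t2}" by simp
      show "finite (CJ n dx (L, H))" by (rule finite_subset[OF CJ_sub]) simp
      fix p q assume pq: "p \<in> {yoff dy b..<yoff dy e}" "q \<in> {xoff n dx t1..<xoff n dx t2}" "m p q \<noteq> 0"
      then obtain k i where ki: "1 \<le> i" "i \<le> n" "k = i - 1 \<or> k = i" "p \<in> {yoff dy k..<yoff dy (Suc k)}"
        "q \<in> {xoff n dx i..<xoff n dx i + dx i}" using supE rows_lt[OF e] cols_lt by blast
      show "p \<in> RJ n dy (L, H) \<and> q \<in> CJ n dx (L, H)" using key[OF ki] pq by blast
    next
      fix p q assume pq: "p \<in> RJ n dy (L, H)" "q \<in> CJ n dx (L, H)" "m p q \<noteq> 0"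
      then obtain k i where ki: "1 \<le> i" "i \<le> n" "k = i - 1 \<or> k = i" "p \<in> {yoff dy k..<yoff dy (Suc k)}"
        "q \<in> {xoff n dx i..<xoff n dx i + dx i}" using supE RJ_sub CJ_sub by blast
      show "p \<in> {yoff dy b..<yoff dy e} \<and> q \<in> {xoff n dx t1..<xoff n dx t2}" using key[OF ki] pq by blast
    qed
  }
  then show "max (2*b-1) (2*t2) \<le> min (2*e-1) (2*t1) \<Longrightarrow>
      crk m {yoff dy b..<yoff dy e} {xoff n dx t1..<xoff n dx t2} =
      crk m (RJ n dy (max (2*b-1) (2*t2), min (2*e-1) (2*t1))) (CJ n dx (max (2*b-1) (2*t2), min (2*e-1) (2*t1)))"
    unfolding L_def H_def by blast
  assume nLH: "\<not> max (2*b-1) (2*t2) \<le> min (2*e-1) (2*t1)"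
  show "crk m {yoff dy b..<yoff dy e} {xoff n dx t1..<xoff n dx t2} = 0"
  proof (rule crk_zero)
    show "finite {xoff n dx t1..<xoff n dx t2}" by simp
    fix p q assume pq: "p \<in> {yoff dy b..<yoff dy e}" "q \<in> {xoff n dx t1..<xoff n dx t2}"
    show "m p q = 0"
    proof (rule ccontr)
      assume "m p q \<noteq> 0"
      then obtain k i where ki: "1 \<le> i" "i \<le> n" "k = i - 1 \<or> k = i" "p \<in> {yoff dy k..<yoff dy (Suc k)}"
        "q \<in> {xoff n dx i..<xoff n dx i + dx i}" using supE rows_lt[OF e] cols_lt pq by blast
      have "p \<in> RJ n dy (L, H)" using key[OF ki] pq by blast
      then have "L \<le> H" unfolding mem_RJ[OF ki(4)] by simp
      then show False using nLH unfolding L_def H_def by simp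
    qed
  qed
qed

lemma blk_nz:
  "blk r c A p q \<noteq> 0 \<Longrightarrow> r \<le> p \<and> p < r + dim_row A \<and> c \<le> q \<and> q < c + dim_col A"
  unfolding blk_def by (auto split: if_splits)

lemma supp_MQ:
  assumes V: "V \<in> rep n dx dy"
  shows "supp n dx dy (\<lambda>p q. MQ n dx dy V $$ (p,q))"
  unfolding supp_def
proof (intro allI impI)
  fix p q assume p: "p < dimY n dy" and q: "q < dimX n dx" and nz: "MQ n dx dy V $$ (p,q) \<noteq> 0"
  have "MQ n dx dy V $$ (p,q) = (\<Sum>i\<in>{1..n}. blk (yoff dy (i - 1)) (xoff n dx i) (fst V i) p q
                 + blk (yoff dy i) (xoff n dx i) (snd V i) p q)"
    unfolding MQ_def using p q by simp
  with nz obtain i where i: "i \<in> {1..n}" and t: "blk (yoff dy (i - 1)) (xoff n dx i) (fst V i) p q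
                 + blk (yoff dy i) (xoff n dx i) (snd V i) p q \<noteq> 0"
    by (metis (no_types, lifting) sum.neutral)
  have dims: "fst V i \<in> carrier_mat (dy (i - 1)) (dx i)" "snd V i \<in> carrier_mat (dy i) (dx i)"
    using V i unfolding rep_def by auto
  have si: "Suc (i - 1) = i" using i by simp
  show "\<exists>k i. 1 \<le> i \<and> i \<le> n \<and> (k = i - 1 \<or> k = i) \<and> p \<in> {yoff dy k..<yoff dy (Suc k)} \<and>
        q \<in> {xoff n dx i..<xoff n dx i + dx i}"
  proof (cases "blk (yoff dy (i - 1)) (xoff n dx i) (fst V i) p q = 0")
    case True
    then have "blk (yoff dy i) (xoff n dx i) (snd V i) p q \<noteq> 0" using t by simp
    from blk_nz[OF this] dims have "p \<in> {yoff dy i..<yoff dy (Suc i)}" "q \<in> {xoff n dx i..<xoff n dx i + dx i}"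
      by (auto simp: yoff_Suc)
    then show ?thesis using i by (intro exI[where x = i] exI[where x = i]) auto
  next
    case False
    from blk_nz[OF False] dims have "p \<in> {yoff dy (i-1)..<yoff dy (Suc (i-1))}" "q \<in> {xoff n dx i..<xoff n dx i + dx i}"
      by (auto simp: yoff_Suc)
    then show ?thesis using i by (intro exI[where x = "i - 1"] exI[where x = i]) auto
  qed
qed


lemma interval_rect:
  assumes "lo < hi" "hi \<le> 2*n"
  shows "\<exists>i j. 1 \<le> i \<and> i \<le> 2*n+1 \<and> 1 \<le> j \<and> j \<le> 2*n+1 \<and>
     max (2 * bJ n j - 1) (2 * t2J n j) = lo \<and> min (2 * eI n i - 1) (2 * t1I n i) = hi"
proof -
  obtain h where h: "hi = 2*h \<or> hi = 2*h+1" by (metis oddE evenE)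
  obtain l where l: "lo = 2*l \<or> lo = 2*l+1" by (metis oddE evenE)
  show ?thesis
  proof (cases "lo = 2*l")
    case lo: True
    show ?thesis
    proof (cases "hi = 2*h")
      case hi: True
      have "l < h" "h \<le> n" using assms lo hi by auto
      then show ?thesis using lo hi
        by (intro exI[of _ "2*n+1-h"] exI[of _ "n - l"]) (auto simp: eI_def t1I_def bJ_def t2J_def)
    next
      case False
      then have hi: "hi = 2*h+1" using h by simp
      have "l \<le> h" "h < n" using assms lo hi by auto
      then show ?thesis using lo hi
        by (intro exI[of _ "h+1"] exI[of _ "n - l"]) (auto simp: eI_def t1I_def bJ_def t2J_def)
    qed
  next
    case False
    then have lo: "lo = 2*l+1" using l by simp
    show ?thesis
    proof (cases "hi = 2*h")
      case hi: True
      have "l < h" "h \<le> n" using assms lo hi by auto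
      then show ?thesis using lo hi
        by (intro exI[of _ "2*n+1-h"] exI[of _ "n + l + 1"]) (auto simp: eI_def t1I_def bJ_def t2J_def)
    next
      case False
      then have hi: "hi = 2*h+1" using h by simp
      have "l < h" "h < n" using assms lo hi by auto
      then show ?thesis using lo hi
        by (intro exI[of _ "h+1"] exI[of _ "n + l + 1"]) (auto simp: eI_def t1I_def bJ_def t2J_def)
    qed
  qed
qed

lemma caseA1: assumes "k + 2 \<le> i" "i \<le> n"
  shows "1 \<le> Suc k \<and> Suc k \<le> 2*n+1 \<and> 1 \<le> n - i + 1 \<and> n - i + 1 \<le> 2*n+1 \<and>
    eI n (Suc k) = Suc k \<and> t1I n (Suc k) = n \<and> bJ n (n - i + 1) = 0 \<and> t2J n (n - i + 1) = i - 1 \<and>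
    \<not> max (2 * 0 - 1) (2 * (i - 1)) \<le> min (2 * Suc k - 1) (2 * n)"
  using assms by (auto simp: eI_def t1I_def bJ_def t2J_def)

lemma caseA2: assumes "i + 1 \<le> k" "k \<le> n" "1 \<le> i"
  shows "1 \<le> 2*n+1-i \<and> 2*n+1-i \<le> 2*n+1 \<and> 1 \<le> n + k \<and> n + k \<le> 2*n+1 \<and>
    eI n (2*n+1-i) = Suc n \<and> t1I n (2*n+1-i) = i \<and> bJ n (n + k) = k \<and> t2J n (n + k) = 0 \<and>
    \<not> max (2 * k - 1) (2 * 0) \<le> min (2 * Suc n - 1) (2 * i)"
  using assms by (auto simp: eI_def t1I_def bJ_def t2J_def)

lemma params_bd: "eI n i \<le> Suc n" "t1I n i \<le> n"
  by (auto simp: eI_def t1I_def)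



lemma zeta_zmat: "zeta n dx dy V = zmat (MQ n dx dy V) (dimY n dy) (dimX n dx)"
  unfolding zeta_def zmat_def ..

lemma MQ_carrier: "MQ n dx dy V \<in> carrier_mat (dimY n dy) (dimX n dx)"
  unfolding MQ_def by simp

definition rk :: "'a::field mat \<Rightarrow> nat \<Rightarrow> (nat \<Rightarrow> nat) \<Rightarrow> (nat \<Rightarrow> nat) \<Rightarrow> nat \<Rightarrow> nat \<Rightarrow> nat" where
  "rk S n dx dy i j = crk (\<lambda>p q. S $$ (p,q)) {yoff dy (bJ n j)..<yoff dy (eI n i)} {xoff n dx (t1I n i)..<xoff n dx (t2J n j)}"

lemma tl_eq_iff:
  fixes S S0 :: "'a::field mat"
  assumes S: "S \<in> carrier_mat (dimY n dy) (dimX n dx)" and S0: "S0 \<in> carrier_mat (dimY n dy) (dimX n dx)"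
    and i: "i \<le> 2*n+1" and j: "j \<le> 2*n+1"
  shows "mrank (topleft n dx dy (zmat S (dimY n dy) (dimX n dx)) i j) = mrank (topleft n dx dy (zmat S0 (dimY n dy) (dimX n dx)) i j)
     \<longleftrightarrow> rk S n dx dy i j = rk S0 n dx dy i j"
  using topleft_rank[OF S i j] topleft_rank[OF S0 i j] unfolding rk_def by simp

lemma orbit_rect:
  assumes V: "V \<in> rep n dx dy" and Vs: "satisfies n dx dy V r"
    and W: "W \<in> rep n dx dy" and Ws: "satisfies n dx dy W r"
    and e: "e \<le> Suc n" and t1: "t1 \<le> n"
  shows "crk (\<lambda>p q. MQ n dx dy V $$ (p,q)) {yoff dy b..<yoff dy e} {xoff n dx t1..<xoff n dx t2}
       = crk (\<lambda>p q. MQ n dx dy W $$ (p,q)) {yoff dy b..<yoff dy e} {xoff n dx t1..<xoff n dx t2}"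
proof (cases "max (2*b-1) (2*t2) \<le> min (2*e-1) (2*t1)")
  case True
  define J where "J = (max (2*b-1) (2*t2), min (2*e-1) (2*t1))"
  have J: "J \<in> intervals n" unfolding intervals_def J_def using True t1 by auto
  have "crk (\<lambda>p q. MQ n dx dy V $$ (p,q)) {yoff dy b..<yoff dy e} {xoff n dx t1..<xoff n dx t2}
      = crk (\<lambda>p q. MQ n dx dy V $$ (p,q)) (RJ n dy J) (CJ n dx J)"
    unfolding J_def by (rule crk_rect(1)[OF supp_MQ[OF V] e t1 True])
  also have "\<dots> = mrank (MJ n dx dy V J)" by (rule mrank_MJ[symmetric])
  also have "\<dots> = r J" using Vs J unfolding satisfies_def by blast
  also have "\<dots> = mrank (MJ n dx dy W J)" using Ws J unfolding satisfies_def by simp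
  also have "\<dots> = crk (\<lambda>p q. MQ n dx dy W $$ (p,q)) (RJ n dy J) (CJ n dx J)" by (rule mrank_MJ)
  also have "\<dots> = crk (\<lambda>p q. MQ n dx dy W $$ (p,q)) {yoff dy b..<yoff dy e} {xoff n dx t1..<xoff n dx t2}"
    unfolding J_def by (rule crk_rect(1)[OF supp_MQ[OF W] e t1 True, symmetric])
  finally show ?thesis .
next
  case False
  show ?thesis using crk_rect(2)[OF supp_MQ[OF V] e t1 False] crk_rect(2)[OF supp_MQ[OF W] e t1 False] by simp
qed

lemma yoff_0: "yoff dy 0 = 0"
  unfolding yoff_def by simp

lemma yblocks_ex: "p < dimY n dy \<Longrightarrow> \<exists>k. k \<le> n \<and> p \<in> {yoff dy k..<yoff dy (Suc k)}"
proof -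
  assume p: "p < dimY n dy"
  have "p \<in> {yoff dy 0..<yoff dy (Suc n)}" using p unfolding dimY_yoff yoff_0 by simp
  then obtain k where "k < Suc n" "p \<in> {yoff dy k..<yoff dy (Suc k)}" using yrange[THEN iffD1] by blast
  then show ?thesis by (intro exI[of _ k]) simp
qed

lemma xblocks_ex: "q < dimX n dx \<Longrightarrow> \<exists>i. 1 \<le> i \<and> i \<le> n \<and> q \<in> {xoff n dx i..<xoff n dx i + dx i}"
proof -
  assume q: "q < dimX n dx"
  have "q \<in> {xoff n dx n..<xoff n dx 0}" using q unfolding dimX_xoff by simp
  then obtain i where "0 < i" "i \<le> n" "q \<in> {xoff n dx i..<xoff n dx i + dx i}" using xrange[OF order_refl, THEN iffD1] by blast
  then show ?thesis by (intro exI[of _ i]) simp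
qed

theorem proposition4p4:
  fixes n :: nat and dx dy :: "nat \<Rightarrow> nat" and r :: "nat \<times> nat \<Rightarrow> nat"
    and Z :: "'a::field mat"
  assumes "is_quiver_rank_array TYPE('a) n dx dy r"
    and "Z \<in> Yw n dx dy"
  shows "(\<forall>i\<in>{1..2*n+1}. \<forall>j\<in>{1..2*n+1}. mrank (topleft n dx dy Z i j) = bmat TYPE('a) n dx dy r i j)
         \<longleftrightarrow> (\<exists>V\<in>rep n dx dy. satisfies n dx dy V r \<and> Z = zeta n dx dy V)"
proof -
  let ?Y = "dimY n dy" and ?X = "dimX n dx"
  define V0 where "V0 = (SOME V::'a qrep. V \<in> orbit_r n dx dy r)"
  have V0: "V0 \<in> orbit_r n dx dy r" using assms(1) unfolding is_quiver_rank_array_def V0_def by (rule someI_ex)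
  then have V0r: "V0 \<in> rep n dx dy" and V0s: "satisfies n dx dy V0 r" unfolding orbit_r_def by auto
  define S0 where "S0 = MQ n dx dy V0"
  have S0C: "S0 \<in> carrier_mat ?Y ?X" unfolding S0_def by (rule MQ_carrier)
  have bm: "bmat TYPE('a) n dx dy r i j = mrank (topleft n dx dy (zmat S0 ?Y ?X) i j)" for i j
    unfolding bmat_def V0_def[symmetric] S0_def zeta_zmat ..
  obtain S where SC: "S \<in> carrier_mat ?Y ?X" and Z: "Z = zmat S ?Y ?X"
    using assms(2) unfolding Yw_def zmat_def by blast
  have LHS: "(\<forall>i\<in>{1..2*n+1}. \<forall>j\<in>{1..2*n+1}. mrank (topleft n dx dy Z i j) = bmat TYPE('a) n dx dy r i j)
      \<longleftrightarrow> (\<forall>i\<in>{1..2*n+1}. \<forall>j\<in>{1..2*n+1}. rk S n dx dy i j = rk S0 n dx dy i j)"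
    unfolding bm Z using tl_eq_iff[OF SC S0C] by auto
  let ?s = "\<lambda>p q. S $$ (p,q)"
  let ?sz = "\<lambda>p q. S0 $$ (p,q)"
  have sp0: "supp n dx dy ?sz" unfolding S0_def by (rule supp_MQ[OF V0r])
  show ?thesis unfolding LHS
  proof
    assume H: "\<forall>i\<in>{1..2*n+1}. \<forall>j\<in>{1..2*n+1}. rk S n dx dy i j = rk S0 n dx dy i j"
    have rkeq: "crk ?s {yoff dy (bJ n j)..<yoff dy (eI n i)} {xoff n dx (t1I n i)..<xoff n dx (t2J n j)}
       = crk ?sz {yoff dy (bJ n j)..<yoff dy (eI n i)} {xoff n dx (t1I n i)..<xoff n dx (t2J n j)}"
      if "1 \<le> i" "i \<le> 2*n+1" "1 \<le> j" "j \<le> 2*n+1" for i j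
      using H that unfolding rk_def by auto
    have spS: "supp n dx dy ?s"
      unfolding supp_def
    proof (intro allI impI)
      fix p q assume p: "p < ?Y" and q: "q < ?X" and nz: "?s p q \<noteq> 0"
      obtain k where k: "k \<le> n" "p \<in> {yoff dy k..<yoff dy (Suc k)}" using yblocks_ex[OF p] by blast
      obtain i where i: "1 \<le> i" "i \<le> n" "q \<in> {xoff n dx i..<xoff n dx i + dx i}" using xblocks_ex[OF q] by blast
      show "\<exists>k i. 1 \<le> i \<and> i \<le> n \<and> (k = i - 1 \<or> k = i) \<and> p \<in> {yoff dy k..<yoff dy (Suc k)} \<and>
        q \<in> {xoff n dx i..<xoff n dx i + dx i}"
      proof (cases "k = i - 1 \<or> k = i")
        case True then show ?thesis using k i by (intro exI[where x = k] exI[where x = i]) simp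
      next
        case False
        then have "k + 2 \<le> i \<or> i + 1 \<le> k" by arith
        then have "?s p q = 0"
        proof
          assume c: "k + 2 \<le> i"
          note A = caseA1[OF c i(2)]
          have e1: "crk ?s {yoff dy 0..<yoff dy (Suc k)} {xoff n dx n..<xoff n dx (i - 1)}
              = crk ?sz {yoff dy 0..<yoff dy (Suc k)} {xoff n dx n..<xoff n dx (i - 1)}"
            using rkeq[of "Suc k" "n - i + 1"] A by simp
          have "crk ?sz {yoff dy 0..<yoff dy (Suc k)} {xoff n dx n..<xoff n dx (i - 1)} = 0"
            by (rule crk_rect(2)[OF sp0]) (use A k in simp_all)
          then have z: "crk ?s {yoff dy 0..<yoff dy (Suc k)} {xoff n dx n..<xoff n dx (i - 1)} = 0" using e1 by simp
          have pR: "p \<in> {yoff dy 0..<yoff dy (Suc k)}" using mem_rows[OF k(2)] by simp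
          have qC: "q \<in> {xoff n dx n..<xoff n dx (i - 1)}" using mem_cols[OF order_refl i] i by simp
          show "?s p q = 0" by (rule crk_zero_imp[OF _ z pR qC]) simp
        next
          assume c: "i + 1 \<le> k"
          note A = caseA2[OF c k(1) i(1)]
          have e1: "crk ?s {yoff dy k..<yoff dy (Suc n)} {xoff n dx i..<xoff n dx 0}
              = crk ?sz {yoff dy k..<yoff dy (Suc n)} {xoff n dx i..<xoff n dx 0}"
            using rkeq[of "2*n+1-i" "n + k"] A by simp
          have "crk ?sz {yoff dy k..<yoff dy (Suc n)} {xoff n dx i..<xoff n dx 0} = 0"
            by (rule crk_rect(2)[OF sp0]) (use A i in simp_all)
          then have z: "crk ?s {yoff dy k..<yoff dy (Suc n)} {xoff n dx i..<xoff n dx 0} = 0" using e1 by simp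
          have pR: "p \<in> {yoff dy k..<yoff dy (Suc n)}" using mem_rows[OF k(2)] k(1) by simp
          have qC: "q \<in> {xoff n dx i..<xoff n dx 0}" using mem_cols[OF i(2) i] i by simp
          show "?s p q = 0" by (rule crk_zero_imp[OF _ z pR qC]) simp
        qed
        with nz show ?thesis by simp
      qed
    qed
    define Va where "Va = (\<lambda>i. mat (dy (i-1)) (dx i) (\<lambda>(a,c). S $$ (yoff dy (i-1) + a, xoff n dx i + c)))"
    define Vb where "Vb = (\<lambda>i. mat (dy i) (dx i) (\<lambda>(a,c). S $$ (yoff dy i + a, xoff n dx i + c)))"
    define V where "V = (Va, Vb)"
    have Vr: "V \<in> rep n dx dy" unfolding rep_def V_def Va_def Vb_def by auto
    have MQS: "MQ n dx dy V = S"
    proof (rule eq_matI)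
      show "dim_row (MQ n dx dy V) = dim_row S" "dim_col (MQ n dx dy V) = dim_col S"
        using SC MQ_dims[of n dx dy V] by auto
      fix p q assume "p < dim_row S" "q < dim_col S"
      then have p: "p < ?Y" and q: "q < ?X" using SC by auto
      obtain k where k: "k \<le> n" "p \<in> {yoff dy k..<yoff dy (Suc k)}" using yblocks_ex[OF p] by blast
      obtain i where i: "1 \<le> i" "i \<le> n" "q \<in> {xoff n dx i..<xoff n dx i + dx i}" using xblocks_ex[OF q] by blast
      define T where "T = (\<lambda>i'. blk (yoff dy (i' - 1)) (xoff n dx i') (Va i') p q + blk (yoff dy i') (xoff n dx i') (Vb i') p q)"
      have "MQ n dx dy V $$ (p,q) = (\<Sum>i'\<in>{1..n}. T i')"
        unfolding MQ_def V_def T_def using p q by simp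
      also have "\<dots> = T i + (\<Sum>i'\<in>{1..n} - {i}. T i')" using i by (simp add: sum.remove)
      also have "(\<Sum>i'\<in>{1..n} - {i}. T i') = 0"
      proof (rule sum.neutral, rule ballI)
        fix i' assume i': "i' \<in> {1..n} - {i}"
        have "q \<notin> {xoff n dx i'..<xoff n dx i' + dx i'}"
        proof
          assume "q \<in> {xoff n dx i'..<xoff n dx i' + dx i'}"
          then have "i' = i" by (rule xblock_unique[OF _ i(3)]) (use i' i in auto)
          then show False using i' by simp
        qed
        then show "T i' = 0" unfolding T_def blk_def Va_def Vb_def by auto
      qed
      also have "T i = (if k = i - 1 then S $$ (p,q) else 0) + (if k = i then S $$ (p,q) else 0)"
      proof -
        have a: "blk (yoff dy (i - 1)) (xoff n dx i) (Va i) p q = (if k = i - 1 then S $$ (p,q) else 0)"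
        proof (cases "k = i - 1")
          case True
          then have "p \<in> {yoff dy (i-1)..<yoff dy (i-1) + dy (i-1)}" using k(2) by (simp add: yoff_Suc)
          then have h1: "yoff dy (i-1) \<le> p" "p - yoff dy (i-1) < dy (i-1)" "p < yoff dy (i-1) + dy (i-1)" by auto
          have h2: "xoff n dx i \<le> q" "q - xoff n dx i < dx i" "q < xoff n dx i + dx i" using i(3) by auto
          show ?thesis using True h1 h2 unfolding blk_def Va_def by simp
        next
          case False
          have "p \<notin> {yoff dy (i-1)..<yoff dy (Suc (i-1))}" using yblock_unique[OF k(2)] False by blast
          then have "\<not> (yoff dy (i-1) \<le> p \<and> p < yoff dy (i-1) + dy (i-1))" by (simp add: yoff_Suc)
          then show ?thesis using False unfolding blk_def Va_def by auto
        qed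
        have b: "blk (yoff dy i) (xoff n dx i) (Vb i) p q = (if k = i then S $$ (p,q) else 0)"
        proof (cases "k = i")
          case True
          then have "p \<in> {yoff dy i..<yoff dy i + dy i}" using k(2) by (simp add: yoff_Suc)
          then have h1: "yoff dy i \<le> p" "p - yoff dy i < dy i" "p < yoff dy i + dy i" by auto
          have h2: "xoff n dx i \<le> q" "q - xoff n dx i < dx i" "q < xoff n dx i + dx i" using i(3) by auto
          show ?thesis using True h1 h2 unfolding blk_def Vb_def by simp
        next
          case False
          have "p \<notin> {yoff dy i..<yoff dy (Suc i)}" using yblock_unique[OF k(2)] False by blast
          then have "\<not> (yoff dy i \<le> p \<and> p < yoff dy i + dy i)" by (simp add: yoff_Suc)
          then show ?thesis using False unfolding blk_def Vb_def by auto
        qed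
        show ?thesis unfolding T_def a b ..
      qed
      also have "\<dots> + 0 = S $$ (p,q)"
      proof (cases "k = i - 1 \<or> k = i")
        case True
        then show ?thesis using i(1) by auto
      next
        case False
        have "S $$ (p,q) = 0"
        proof (rule ccontr)
          assume "S $$ (p,q) \<noteq> 0"
          then obtain k' i' where ki: "1 \<le> i'" "i' \<le> n" "k' = i' - 1 \<or> k' = i'"
            "p \<in> {yoff dy k'..<yoff dy (Suc k')}" "q \<in> {xoff n dx i'..<xoff n dx i' + dx i'}"
            using spS p q unfolding supp_def by blast
          have "k' = k" using yblock_unique[OF ki(4) k(2)] .
          moreover have "i' = i" using xblock_unique[OF ki(5) i(3) ki(1,2) i(1,2)] .
          ultimately show False using ki(3) False by simp
        qed
        then show ?thesis using False by simp
      qed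
      finally show "MQ n dx dy V $$ (p,q) = S $$ (p,q)" .
    qed
    have sat: "satisfies n dx dy V r"
      unfolding satisfies_def
    proof
      fix J assume J: "J \<in> intervals n"
      obtain lo hi where Jeq: "J = (lo,hi)" "lo \<le> hi" "hi \<le> 2*n" using J unfolding intervals_def by auto
      have m1: "mrank (MJ n dx dy V J) = crk ?s (RJ n dy J) (CJ n dx J)" unfolding mrank_MJ MQS ..
      have m2: "r J = crk ?sz (RJ n dy J) (CJ n dx J)"
        using V0s J unfolding satisfies_def mrank_MJ S0_def by auto
      have finC: "finite (CJ n dx J)" by (rule finite_subset[OF CJ_sub]) simp
      have "crk ?s (RJ n dy J) (CJ n dx J) = crk ?sz (RJ n dy J) (CJ n dx J)"
      proof (cases "lo = hi")
        case True
        show ?thesis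
        proof (cases "even lo")
          case True
          have "CJ n dx J = {}"
          proof -
            have "\<not> (lo \<le> 2 * i - 1 \<and> 2 * i - 1 \<le> hi)" if "1 \<le> i" for i
              using \<open>lo = hi\<close> True that by presburger
            then show ?thesis unfolding CJ_def Jeq by auto
          qed
          then show ?thesis using crk_zero[of "{}" "RJ n dy J" ?s] crk_zero[of "{}" "RJ n dy J" ?sz] by simp
        next
          case False
          have "RJ n dy J = {}"
          proof -
            have "\<not> (lo \<le> 2 * i \<and> 2 * i \<le> hi)" for i
              using \<open>lo = hi\<close> False by auto
            then show ?thesis unfolding RJ_def Jeq by auto
          qed
          then show ?thesis using crk_zero[OF finC, of "RJ n dy J" ?s] crk_zero[OF finC, of "RJ n dy J" ?sz] by simp
        qed
      next
        case False
        then have "lo < hi" using Jeq by simp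
        then obtain i j where ij: "1 \<le> i" "i \<le> 2*n+1" "1 \<le> j" "j \<le> 2*n+1"
          "max (2 * bJ n j - 1) (2 * t2J n j) = lo" "min (2 * eI n i - 1) (2 * t1I n i) = hi"
          using interval_rect[OF _ Jeq(3)] by blast
        have le: "max (2 * bJ n j - 1) (2 * t2J n j) \<le> min (2 * eI n i - 1) (2 * t1I n i)"
          using ij Jeq by simp
        have "crk ?s (RJ n dy J) (CJ n dx J) = crk ?s {yoff dy (bJ n j)..<yoff dy (eI n i)} {xoff n dx (t1I n i)..<xoff n dx (t2J n j)}"
          using crk_rect(1)[OF spS params_bd le] ij Jeq by simp
        also have "\<dots> = crk ?sz {yoff dy (bJ n j)..<yoff dy (eI n i)} {xoff n dx (t1I n i)..<xoff n dx (t2J n j)}"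
          by (rule rkeq[OF ij(1-4)])
        also have "\<dots> = crk ?sz (RJ n dy J) (CJ n dx J)"
          using crk_rect(1)[OF sp0 params_bd le] ij Jeq by simp
        finally show ?thesis .
      qed
      then show "mrank (MJ n dx dy V J) = r J" using m1 m2 by simp
    qed
    have "Z = zeta n dx dy V" unfolding Z zeta_zmat MQS ..
    then show "\<exists>V\<in>rep n dx dy. satisfies n dx dy V r \<and> Z = zeta n dx dy V" using Vr sat by blast
  next
    assume "\<exists>V\<in>rep n dx dy. satisfies n dx dy V r \<and> Z = zeta n dx dy V"
    then obtain V where Vr: "V \<in> rep n dx dy" and Vs: "satisfies n dx dy V r" and ZV: "Z = zeta n dx dy V" by blast
    have eqz: "zmat S ?Y ?X = zmat (MQ n dx dy V) ?Y ?X" using Z ZV zeta_zmat[of n dx dy V] by simp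
    have SM: "S = MQ n dx dy V"
    proof (rule eq_matI)
      show "dim_row S = dim_row (MQ n dx dy V)" "dim_col S = dim_col (MQ n dx dy V)"
        using SC MQ_dims[of n dx dy V] by auto
      fix p q assume "p < dim_row (MQ n dx dy V)" "q < dim_col (MQ n dx dy V)"
      then have p: "p < ?Y" and q: "q < ?X" using MQ_dims[of n dx dy V] by auto
      have "zmat S ?Y ?X $$ (p,q) = zmat (MQ n dx dy V) ?Y ?X $$ (p,q)" using eqz by simp
      then show "S $$ (p,q) = MQ n dx dy V $$ (p,q)"
        using zmat_idx[OF SC, of p q] zmat_idx[OF MQ_carrier[of n dx dy V], of p q] p q by simp
    qed
    show "\<forall>i\<in>{1..2*n+1}. \<forall>j\<in>{1..2*n+1}. rk S n dx dy i j = rk S0 n dx dy i j"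
      unfolding rk_def SM S0_def using orbit_rect[OF Vr Vs V0r V0s params_bd] by blast
  qed
qed


end
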